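(* Let $F=(f_1,\dots,f_s)\in K[\mathbf{X}]^s$, $I=\langle F\rangle$, $\mathbf{r}\in\mathbb{Q}^n$ and $\le_m$ a monomial order. Let $(h_1,\dots,h_k)$ be a finite Gröbner basis of the ideal $\langle F^h\rangle_{(\mathbf{r},0)}\subseteq K\{\mathbf{X},t;(\mathbf{r},0)\}$ with respect to $<_{(\mathbf{r},0),m}$, consisting of homogeneous polynomials belonging to $\langle F^h\rangle$. Then $(h_{1,*},\dots,h_{k,*})$ is an $\mathbf{r}$-local Gröbner basis of $I$ with respect to $<_{\mathbf{r},m}$.
   Context: $K$ is a field complete for a discrete valuation $\mathrm{val}$. For $\mathbf{r}\in\mathbb{Q}^n$, $K\{\mathbf{X};\mathbf{r}\}$ is the Tate algebra of series $\sum a_\alpha\mathbf{X}^\alpha$ with $\mathrm{val}(a_\alpha)-\mathbf{r}\cdot\alpha\to+\infty$; $\mathrm{val}_{\mathbf{r}}(a\mathbf{X}^\alpha)=\mathrm{val}(a)-\mathbf{r}\cdot\alpha$. The order $<_{\mathbf{r},m}$ on terms: $a\mathbf{X}^\alpha<_{\mathbf{r},m}b\mathbf{X}^\beta$ iff $\mathrm{val}_{\mathbf{r}}(a\mathbf{X}^\alpha)>\mathrm{val}_{\mathbf{r}}(b\mathbf{X}^\beta)$, or equal and $\mathbf{X}^\alpha<_m\mathbf{X}^\beta$; $\mathrm{LT}$ denotes the maximal term. For an ideal $J$ of a polynomial ring, $J_{\mathbf{r}}$ is the ideal it generates in the Tate algebra. A Gröbner basis of an ideal $J$ of a Tate algebra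 is a subset $G\subseteq J$ such that each nonzero element of $J$ has leading term divisible by the leading term of some element of $G$; an $\mathbf{r}$-local Gröbner basis of a polynomial ideal $I$ is a Gröbner basis of $I_{\mathbf{r}}$ consisting of polynomials of $I$. Homogenization: for $f\in K[\mathbf{X}]$, $f^*=t^{\deg f}f(\mathbf{X}/t)\in K[\mathbf{X},t]$; dehomogenization: $h_*=h(\mathbf{X},1)$. $F^h=(f_1^*,\dots,f_s^* )$ and $\langle F^h\rangle$ is the ideal of $K[\mathbf{X},t]$ it generates. $K\{\mathbf{X},t;(\mathbf{r},0)\}$ is the Tate algebra in $n+1$ variables with log-radius $0$ for $t$, and $\mathrm{val}_{(\mathbf{r},0)}(a\mathbf{X}^\alpha t^u)=\mathrm{val}_{\mathbf{r}}(a\mathbf{X}^\alpha)$. The order $<_{(\mathbf{r},0),m}$: $a\mathbf{X}^\alpha t^u<b\mathbf{X}^\beta t^v$ iff $\mathrm{val}_{\mathbf{r}}(a\mathbf{X}^\alpha)>\mathrm{val}_{\mathbf{r}}(b\mathbf{X}^\beta)$; or these are equal and $|\alpha|+u<|\beta|+v$; or both are equal and $\mathbf{X}^\alpha<_m\mathbf{X}^\beta$. *)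

theory Defs
  imports Complex_Main
begin

(* Monomials in variables X_0, X_1, ... are exponent vectors nat => nat;
   a monomial "in N variables" has support in {0..<N}.
   (Formal) series / polynomials over K are coefficient functions mono => 'a. *)
type_synonym mono = "nat \<Rightarrow> nat"
type_synonym 'a series = "mono \<Rightarrow> 'a"

definition monoN :: "nat \<Rightarrow> mono \<Rightarrow> bool" where
  "monoN N \<alpha> \<longleftrightarrow> (\<forall>i\<ge>N. \<alpha> i = 0)"

definition mdeg :: "nat \<Rightarrow> mono \<Rightarrow> nat" where
  "mdeg N \<alpha> = (\<Sum>i<N. \<alpha> i)"

definition mono_dvd :: "mono \<Rightarrow> mono \<Rightarrow> bool" where
  "mono_dvd \<alpha> \<beta> \<longleftrightarrow> (\<forall>i. \<alpha> i \<le> \<beta> i)"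

definition zero_series :: "'a::zero series" where
  "zero_series = (\<lambda>_. 0)"

definition complete_dvf :: "('a::field \<Rightarrow> int) \<Rightarrow> bool" where
  "complete_dvf val \<longleftrightarrow>
     (\<forall>x y. x \<noteq> 0 \<longrightarrow> y \<noteq> 0 \<longrightarrow> val (x * y) = val x + val y) \<and>
     (\<forall>x y. x \<noteq> 0 \<longrightarrow> y \<noteq> 0 \<longrightarrow> x + y \<noteq> 0 \<longrightarrow> val (x + y) \<ge> min (val x) (val y)) \<and>
     (\<exists>x. x \<noteq> 0 \<and> val x = 1) \<and>
     (\<forall>s :: nat \<Rightarrow> 'a.
        (\<forall>M. \<exists>N. \<forall>p\<ge>N. \<forall>q\<ge>N. s p = s q \<or> val (s p - s q) \<ge> M) \<longrightarrow>
        (\<exists>L. \<forall>M. \<exists>N. \<forall>p\<ge>N. s p = L \<or> val (s p - L) \<ge> M))"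

definition val_r :: "('a \<Rightarrow> int) \<Rightarrow> nat \<Rightarrow> (nat \<Rightarrow> rat) \<Rightarrow> 'a \<Rightarrow> mono \<Rightarrow> rat" where
  "val_r val N r a \<alpha> = of_int (val a) - (\<Sum>i<N. r i * of_nat (\<alpha> i))"

definition tate :: "('a::zero \<Rightarrow> int) \<Rightarrow> nat \<Rightarrow> (nat \<Rightarrow> rat) \<Rightarrow> 'a series \<Rightarrow> bool" where
  "tate val N r f \<longleftrightarrow> (\<forall>\<alpha>. f \<alpha> \<noteq> 0 \<longrightarrow> monoN N \<alpha>) \<and>
     (\<forall>M::rat. finite {\<alpha>. f \<alpha> \<noteq> 0 \<and> val_r val N r (f \<alpha>) \<alpha> \<le> M})"

definition is_poly :: "nat \<Rightarrow> 'a::zero series \<Rightarrow> bool" where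
  "is_poly N f \<longleftrightarrow> (\<forall>\<alpha>. f \<alpha> \<noteq> 0 \<longrightarrow> monoN N \<alpha>) \<and> finite {\<alpha>. f \<alpha> \<noteq> 0}"

definition series_mult :: "'a::comm_ring_1 series \<Rightarrow> 'a series \<Rightarrow> 'a series" where
  "series_mult f g \<gamma> = (\<Sum>\<alpha>\<in>{\<alpha>. \<forall>i. \<alpha> i \<le> \<gamma> i}. f \<alpha> * g (\<lambda>i. \<gamma> i - \<alpha> i))"

definition poly_ideal :: "nat \<Rightarrow> 'a::comm_ring_1 series set \<Rightarrow> 'a series set" where
  "poly_ideal N P = {f. \<exists>(k::nat) g u. (\<forall>i<k. g i \<in> P \<and> is_poly N (u i)) \<and>
                         f = (\<lambda>\<alpha>. \<Sum>i<k. series_mult (u i) (g i) \<alpha>)}"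

definition tate_ideal :: "('a::comm_ring_1 \<Rightarrow> int) \<Rightarrow> nat \<Rightarrow> (nat \<Rightarrow> rat) \<Rightarrow> 'a series set \<Rightarrow> 'a series set" where
  "tate_ideal val N r P = {f. \<exists>(k::nat) g u. (\<forall>i<k. g i \<in> P \<and> tate val N r (u i)) \<and>
                         f = (\<lambda>\<alpha>. \<Sum>i<k. series_mult (u i) (g i) \<alpha>)}"

definition monomial_order :: "nat \<Rightarrow> (mono \<Rightarrow> mono \<Rightarrow> bool) \<Rightarrow> bool" where
  "monomial_order N mless \<longleftrightarrow>
     (\<forall>\<alpha>. monoN N \<alpha> \<longrightarrow> \<not> mless \<alpha> \<alpha>) \<and>
     (\<forall>\<alpha> \<beta> \<gamma>. monoN N \<alpha> \<longrightarrow> monoN N \<beta> \<longrightarrow> monoN N \<gamma> \<longrightarrow> mless \<alpha> \<beta> \<longrightarrow> mless \<beta> \<gamma> \<longrightarrow> mless \<alpha> \<gamma>) \<and>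
     (\<forall>\<alpha> \<beta>. monoN N \<alpha> \<longrightarrow> monoN N \<beta> \<longrightarrow> \<alpha> \<noteq> \<beta> \<longrightarrow> mless \<alpha> \<beta> \<or> mless \<beta> \<alpha>) \<and>
     (\<forall>\<alpha> \<beta> \<gamma>. monoN N \<alpha> \<longrightarrow> monoN N \<beta> \<longrightarrow> monoN N \<gamma> \<longrightarrow> mless \<alpha> \<beta> \<longrightarrow>
        mless (\<lambda>i. \<alpha> i + \<gamma> i) (\<lambda>i. \<beta> i + \<gamma> i)) \<and>
     wf {(\<alpha>, \<beta>). monoN N \<alpha> \<and> monoN N \<beta> \<and> mless \<alpha> \<beta>}"

(* term order <_{r,m}:  term_less a alpha b beta  means  a X^alpha < b X^beta *)
definition ord_rm :: "('a \<Rightarrow> int) \<Rightarrow> nat \<Rightarrow> (nat \<Rightarrow> rat) \<Rightarrow> (mono \<Rightarrow> mono \<Rightarrow> bool)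
                       \<Rightarrow> 'a \<Rightarrow> mono \<Rightarrow> 'a \<Rightarrow> mono \<Rightarrow> bool" where
  "ord_rm val n r mless a \<alpha> b \<beta> \<longleftrightarrow>
     val_r val n r a \<alpha> > val_r val n r b \<beta> \<or>
     (val_r val n r a \<alpha> = val_r val n r b \<beta> \<and> mless \<alpha> \<beta>)"

(* term order <_{(r,0),m} on terms in X_0..X_(n-1), t = X_n *)
definition ord_r0m :: "('a \<Rightarrow> int) \<Rightarrow> nat \<Rightarrow> (nat \<Rightarrow> rat) \<Rightarrow> (mono \<Rightarrow> mono \<Rightarrow> bool)
                       \<Rightarrow> 'a \<Rightarrow> mono \<Rightarrow> 'a \<Rightarrow> mono \<Rightarrow> bool" where
  "ord_r0m val n r mless a \<alpha> b \<beta> \<longleftrightarrow>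
     val_r val n r a \<alpha> > val_r val n r b \<beta> \<or>
     (val_r val n r a \<alpha> = val_r val n r b \<beta> \<and> mdeg (Suc n) \<alpha> < mdeg (Suc n) \<beta>) \<or>
     (val_r val n r a \<alpha> = val_r val n r b \<beta> \<and> mdeg (Suc n) \<alpha> = mdeg (Suc n) \<beta> \<and>
        mless (\<alpha>(n := 0)) (\<beta>(n := 0)))"

definition lm :: "('a::zero \<Rightarrow> mono \<Rightarrow> 'a \<Rightarrow> mono \<Rightarrow> bool) \<Rightarrow> 'a series \<Rightarrow> mono" where
  "lm tless f = (THE \<alpha>. f \<alpha> \<noteq> 0 \<and> (\<forall>\<beta>. f \<beta> \<noteq> 0 \<longrightarrow> \<beta> \<noteq> \<alpha> \<longrightarrow> tless (f \<beta>) \<beta> (f \<alpha>) \<alpha>))"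

definition is_GB :: "('a::zero \<Rightarrow> mono \<Rightarrow> 'a \<Rightarrow> mono \<Rightarrow> bool) \<Rightarrow> 'a series set \<Rightarrow> 'a series set \<Rightarrow> bool" where
  "is_GB tless J G \<longleftrightarrow> G \<subseteq> J \<and>
     (\<forall>f\<in>J. f \<noteq> zero_series \<longrightarrow>
        (\<exists>g\<in>G. g \<noteq> zero_series \<and> mono_dvd (lm tless g) (lm tless f)))"

definition is_local_GB :: "('a::comm_ring_1 \<Rightarrow> int) \<Rightarrow> nat \<Rightarrow> (nat \<Rightarrow> rat) \<Rightarrow> (mono \<Rightarrow> mono \<Rightarrow> bool)
                           \<Rightarrow> 'a series set \<Rightarrow> 'a series set \<Rightarrow> bool" where
  "is_local_GB val n r mless I G \<longleftrightarrow> G \<subseteq> I \<and>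
     is_GB (ord_rm val n r mless) (tate_ideal val n r I) G"

definition pdeg :: "nat \<Rightarrow> 'a::zero series \<Rightarrow> nat" where
  "pdeg N f = Max (mdeg N ` {\<alpha>. f \<alpha> \<noteq> 0})"

definition homogeneous :: "nat \<Rightarrow> 'a::zero series \<Rightarrow> bool" where
  "homogeneous N h \<longleftrightarrow> (\<exists>d. \<forall>\<alpha>. h \<alpha> \<noteq> 0 \<longrightarrow> mdeg N \<alpha> = d)"

(* homogenization f^* = t^(deg f) f(X/t), t = X_n *)
definition homog :: "nat \<Rightarrow> 'a::zero series \<Rightarrow> 'a series" where
  "homog n f \<beta> = (if monoN (Suc n) \<beta> \<and> mdeg (Suc n) \<beta> = pdeg n f then f (\<beta>(n := 0)) else 0)"

(* dehomogenization h_* = h(X,1) *)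
definition dehomog :: "nat \<Rightarrow> 'a::comm_monoid_add series \<Rightarrow> 'a series" where
  "dehomog n h \<alpha> = (if monoN n \<alpha> then (\<Sum>u\<in>{u. h (\<alpha>(n := u)) \<noteq> 0}. h (\<alpha>(n := u))) else 0)"

end

theory Submission
  imports Defs
begin


definition supp :: "'a::zero series \<Rightarrow> mono set" where "supp f = {\<alpha>. f \<alpha> \<noteq> 0}"
definition madd :: "mono \<Rightarrow> mono \<Rightarrow> mono" where "madd \<alpha> \<beta> = (\<lambda>i. \<alpha> i + \<beta> i)"
definition mminus :: "mono \<Rightarrow> mono \<Rightarrow> mono" where "mminus \<gamma> \<alpha> = (\<lambda>i. \<gamma> i - \<alpha> i)"

lemma finite_le:
  assumes "monoN N \<gamma>"
  shows "finite {\<alpha>. \<forall>i. \<alpha> i \<le> \<gamma> i}"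
proof -
  let ?L = "{\<alpha>. \<forall>i. \<alpha> i \<le> \<gamma> i}"
  let ?M = "Max (insert 0 (\<gamma> ` {..<N}))"
  have inj: "inj_on (\<lambda>\<alpha>. map \<alpha> [0..<N]) ?L"
  proof (rule inj_onI)
    fix x y assume x: "x \<in> ?L" and y: "y \<in> ?L" and e: "map x [0..<N] = map y [0..<N]"
    show "x = y"
    proof
      fix i show "x i = y i"
      proof (cases "i < N")
        case True thus ?thesis using e by (metis map_eq_conv atLeastLessThan_iff set_upt zero_le)
      next
        case False
        then have "\<gamma> i = 0" using assms unfolding monoN_def by auto
        thus ?thesis using x y by (metis (mono_tags) le_zero_eq mem_Collect_eq)
      qed
    qed
  qed
  have "(\<lambda>\<alpha>. map \<alpha> [0..<N]) ` ?L \<subseteq> {xs. set xs \<subseteq> {0..?M} \<and> length xs = N}"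
  proof clarsimp
    fix x i assume x: "\<forall>i. x i \<le> \<gamma> i" and "i < N"
    then have "\<gamma> i \<le> ?M" by (intro Max_ge) auto
    then show "x i \<le> ?M" using x le_trans by blast
  qed
  moreover have "finite {xs. set xs \<subseteq> {0..?M} \<and> length xs = N}"
    by (rule finite_lists_length_eq) auto
  ultimately have "finite ((\<lambda>\<alpha>. map \<alpha> [0..<N]) ` ?L)" by (rule finite_subset)
  thus ?thesis using inj finite_image_iff by blast
qed

lemma madd_mminus: "\<forall>i. \<alpha> i \<le> \<gamma> i \<Longrightarrow> madd \<alpha> (mminus \<gamma> \<alpha>) = \<gamma>"
  unfolding madd_def mminus_def by auto

lemma mminus_madd: "mminus (madd \<alpha> \<beta>) \<alpha> = \<beta>"
  unfolding madd_def mminus_def by auto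

lemma monoN_madd: "monoN N \<alpha> \<Longrightarrow> monoN N \<beta> \<Longrightarrow> monoN N (madd \<alpha> \<beta>)"
  unfolding monoN_def madd_def by auto

lemma conv:
  fixes a b :: "'a::comm_ring_1 series"
  assumes "finite A" "finite B" "supp a \<subseteq> A" "supp b \<subseteq> B"
    "\<forall>\<alpha>\<in>A. monoN N \<alpha>" "\<forall>\<beta>\<in>B. monoN N \<beta>"
  shows "series_mult a b \<gamma> = (\<Sum>p\<in>{p\<in>A\<times>B. madd (fst p) (snd p) = \<gamma>}. a (fst p) * b (snd p))"
proof (cases "\<exists>p\<in>A\<times>B. madd (fst p) (snd p) = \<gamma>")
  case True
  then obtain p where p: "p \<in> A\<times>B" "madd (fst p) (snd p) = \<gamma>" by blast
  then have mg: "monoN N \<gamma>" using assms(5,6) monoN_madd by (metis mem_Times_iff)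
  let ?L = "{\<alpha>. \<forall>i. \<alpha> i \<le> \<gamma> i}"
  let ?S = "{\<alpha>\<in>?L. \<alpha> \<in> A \<and> mminus \<gamma> \<alpha> \<in> B}"
  have fL: "finite ?L" using finite_le[OF mg] .
  have "series_mult a b \<gamma> = (\<Sum>\<alpha>\<in>?L. a \<alpha> * b (mminus \<gamma> \<alpha>))"
    unfolding series_mult_def mminus_def by simp
  also have "\<dots> = (\<Sum>\<alpha>\<in>?S. a \<alpha> * b (mminus \<gamma> \<alpha>))"
    by (rule sum.mono_neutral_right[OF fL]) (use assms(3,4) in \<open>auto simp: supp_def\<close>)
  also have "\<dots> = (\<Sum>p\<in>(\<lambda>\<alpha>. (\<alpha>, mminus \<gamma> \<alpha>)) ` ?S. a (fst p) * b (snd p))"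
    by (subst sum.reindex) (auto intro: inj_onI)
  also have "(\<lambda>\<alpha>. (\<alpha>, mminus \<gamma> \<alpha>)) ` ?S = {p\<in>A\<times>B. madd (fst p) (snd p) = \<gamma>}"
  proof (rule set_eqI, rule iffI)
    fix q assume "q \<in> (\<lambda>\<alpha>. (\<alpha>, mminus \<gamma> \<alpha>)) ` ?S"
    then show "q \<in> {p\<in>A\<times>B. madd (fst p) (snd p) = \<gamma>}" using madd_mminus by auto
  next
    fix q assume q: "q \<in> {p\<in>A\<times>B. madd (fst p) (snd p) = \<gamma>}"
    obtain x y where qq: "q = (x,y)" by fastforce
    have "\<forall>i. x i \<le> \<gamma> i" using q qq unfolding madd_def by auto
    moreover have "mminus \<gamma> x = y" using q qq mminus_madd by auto
    ultimately show "q \<in> (\<lambda>\<alpha>. (\<alpha>, mminus \<gamma> \<alpha>)) ` ?S" using q qq by (auto intro!: image_eqI[of _ _ x])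
  qed
  finally show ?thesis .
next
  case False
  have "series_mult a b \<gamma> = (\<Sum>\<alpha>\<in>{\<alpha>. \<forall>i. \<alpha> i \<le> \<gamma> i}. a \<alpha> * b (mminus \<gamma> \<alpha>))"
    unfolding series_mult_def mminus_def by simp
  also have "\<dots> = 0"
  proof (rule sum.neutral, clarify)
    fix \<alpha> assume le: "\<forall>i. \<alpha> i \<le> \<gamma> i"
    show "a \<alpha> * b (mminus \<gamma> \<alpha>) = 0"
    proof (rule ccontr)
      assume "a \<alpha> * b (mminus \<gamma> \<alpha>) \<noteq> 0"
      then have "\<alpha> \<in> A" "mminus \<gamma> \<alpha> \<in> B" using assms(3,4) by (auto simp: supp_def)
      then show False using False madd_mminus[OF le] by force
    qed
  qed
  moreover have E: "{p\<in>A\<times>B. madd (fst p) (snd p) = \<gamma>} = {}" using False by auto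
  ultimately show ?thesis unfolding E by (simp only: sum.empty)
qed

lemma sm_nz:
  assumes "series_mult a b \<gamma> \<noteq> 0"
  shows "\<exists>\<alpha>. (\<forall>i. \<alpha> i \<le> \<gamma> i) \<and> a \<alpha> \<noteq> 0 \<and> b (mminus \<gamma> \<alpha>) \<noteq> 0"
proof -
  from assms have "(\<Sum>\<alpha>\<in>{\<alpha>. \<forall>i. \<alpha> i \<le> \<gamma> i}. a \<alpha> * b (mminus \<gamma> \<alpha>)) \<noteq> 0"
    unfolding series_mult_def mminus_def by simp
  then obtain \<alpha> where "\<alpha> \<in> {\<alpha>. \<forall>i. \<alpha> i \<le> \<gamma> i}" "a \<alpha> * b (mminus \<gamma> \<alpha>) \<noteq> 0"
    by (meson sum.not_neutral_contains_not_neutral)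
  thus ?thesis by auto
qed

definition push :: "mono set \<Rightarrow> (mono \<Rightarrow> mono) \<Rightarrow> 'a::comm_monoid_add series \<Rightarrow> 'a series" where
  "push S \<phi> c \<gamma> = sum c {\<alpha>\<in>S. \<phi> \<alpha> = \<gamma>}"
definition msum :: "mono set \<Rightarrow> mono set \<Rightarrow> mono set" where
  "msum A B = (\<lambda>p. madd (fst p) (snd p)) ` (A \<times> B)"

lemma supp_sm: "supp a \<subseteq> A \<Longrightarrow> supp b \<subseteq> B \<Longrightarrow> supp (series_mult a b) \<subseteq> msum A B"
proof
  fix \<gamma> assume a: "supp a \<subseteq> A" "supp b \<subseteq> B" "\<gamma> \<in> supp (series_mult a b)"
  then obtain \<alpha> where al: "\<forall>i. \<alpha> i \<le> \<gamma> i" "a \<alpha> \<noteq> 0" "b (mminus \<gamma> \<alpha>) \<noteq> 0"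
    using sm_nz unfolding supp_def by blast
  then have "(\<alpha>, mminus \<gamma> \<alpha>) \<in> A \<times> B" using a by (auto simp: supp_def)
  then show "\<gamma> \<in> msum A B" unfolding msum_def using madd_mminus[OF al(1)] by force
qed

lemma finite_msum: "finite A \<Longrightarrow> finite B \<Longrightarrow> finite (msum A B)"
  unfolding msum_def by auto

lemma monoN_msum: "\<forall>\<alpha>\<in>A. monoN N \<alpha> \<Longrightarrow> \<forall>\<beta>\<in>B. monoN N \<beta> \<Longrightarrow> \<forall>\<gamma>\<in>msum A B. monoN N \<gamma>"
  unfolding msum_def using monoN_madd by auto

lemma supp_push: "supp (push S \<phi> c) \<subseteq> \<phi> ` S"
proof
  fix \<gamma> assume "\<gamma> \<in> supp (push S \<phi> c)"
  then have "push S \<phi> c \<gamma> \<noteq> 0" by (simp add: supp_def)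
  then have "sum c {\<alpha>\<in>S. \<phi> \<alpha> = \<gamma>} \<noteq> 0" by (simp add: push_def)
  then obtain \<alpha> where "\<alpha> \<in> {\<alpha>\<in>S. \<phi> \<alpha> = \<gamma>}" by (meson sum.not_neutral_contains_not_neutral)
  thus "\<gamma> \<in> \<phi> ` S" by (auto intro: sym)
qed

lemma push_mult:
  fixes a b :: "'a::comm_ring_1 series"
  assumes fA: "finite A" and fB: "finite B" and sa: "supp a \<subseteq> A" and sb: "supp b \<subseteq> B"
    and mA: "\<forall>\<alpha>\<in>A. monoN N \<alpha>" and mB: "\<forall>\<beta>\<in>B. monoN N \<beta>"
    and mA': "\<forall>\<alpha>\<in>A. monoN N' (\<phi>1 \<alpha>)" and mB': "\<forall>\<beta>\<in>B. monoN N' (\<phi>2 \<beta>)"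
    and hom: "\<forall>\<alpha>\<in>A. \<forall>\<beta>\<in>B. \<phi>3 (madd \<alpha> \<beta>) = madd (\<phi>1 \<alpha>) (\<phi>2 \<beta>)"
  shows "push (msum A B) \<phi>3 (series_mult a b) \<gamma> = series_mult (push A \<phi>1 a) (push B \<phi>2 b) \<gamma>"
proof -
  define P where "P = A \<times> B"
  define f where "f p = a (fst p) * b (snd p)" for p
  define g where "g p = madd (fst p) (snd p)" for p
  have fP: "finite P" using fA fB P_def by auto
  have "push (msum A B) \<phi>3 (series_mult a b) \<gamma> = (\<Sum>\<epsilon>\<in>{\<epsilon>\<in>msum A B. \<phi>3 \<epsilon> = \<gamma>}. series_mult a b \<epsilon>)"
    unfolding push_def by simp
  also have "\<dots> = (\<Sum>\<epsilon>\<in>{\<epsilon>\<in>msum A B. \<phi>3 \<epsilon> = \<gamma>}. \<Sum>p\<in>{p\<in>P. g p = \<epsilon>}. f p)"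
    by (rule sum.cong[OF refl], subst conv[OF fA fB sa sb mA mB]) (simp add: P_def f_def g_def)
  also have "\<dots> = (\<Sum>\<epsilon>\<in>{\<epsilon>\<in>msum A B. \<phi>3 \<epsilon> = \<gamma>}. \<Sum>p\<in>{p\<in>{p\<in>P. \<phi>3 (g p) = \<gamma>}. g p = \<epsilon>}. f p)"
    by (rule sum.cong[OF refl], rule sum.cong) auto
  also have "\<dots> = (\<Sum>p\<in>{p\<in>P. \<phi>3 (g p) = \<gamma>}. f p)"
    by (rule sum.group) (use fP fA fB finite_msum in \<open>auto simp: msum_def P_def g_def\<close>)
  finally have L: "push (msum A B) \<phi>3 (series_mult a b) \<gamma> = (\<Sum>p\<in>{p\<in>P. \<phi>3 (g p) = \<gamma>}. f p)" .
  define h where "h p = (\<phi>1 (fst p), \<phi>2 (snd p))" for p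
  have "series_mult (push A \<phi>1 a) (push B \<phi>2 b) \<gamma> =
     (\<Sum>q\<in>{q\<in>\<phi>1 ` A \<times> \<phi>2 ` B. g q = \<gamma>}. push A \<phi>1 a (fst q) * push B \<phi>2 b (snd q))"
    by (subst conv[of "\<phi>1 ` A" "\<phi>2 ` B" _ _ N']) (use fA fB supp_push[of A \<phi>1 a] supp_push[of B \<phi>2 b] mA' mB' in \<open>auto simp: g_def\<close>)
  also have "\<dots> = (\<Sum>q\<in>{q\<in>\<phi>1 ` A \<times> \<phi>2 ` B. g q = \<gamma>}. \<Sum>p\<in>{p\<in>{p\<in>P. g (h p) = \<gamma>}. h p = q}. f p)"
  proof (rule sum.cong[OF refl])
    fix q assume q: "q \<in> {q\<in>\<phi>1 ` A \<times> \<phi>2 ` B. g q = \<gamma>}"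
    have "push A \<phi>1 a (fst q) * push B \<phi>2 b (snd q) =
        (\<Sum>x\<in>{\<alpha>\<in>A. \<phi>1 \<alpha> = fst q}. \<Sum>y\<in>{\<beta>\<in>B. \<phi>2 \<beta> = snd q}. a x * b y)"
      unfolding push_def by (rule sum_product)
    also have "\<dots> = (\<Sum>p\<in>{\<alpha>\<in>A. \<phi>1 \<alpha> = fst q} \<times> {\<beta>\<in>B. \<phi>2 \<beta> = snd q}. f p)"
      unfolding f_def by (subst sum.cartesian_product) (simp add: case_prod_beta')
    also have "{\<alpha>\<in>A. \<phi>1 \<alpha> = fst q} \<times> {\<beta>\<in>B. \<phi>2 \<beta> = snd q} = {p\<in>{p\<in>P. g (h p) = \<gamma>}. h p = q}"
      using q by (auto simp: P_def h_def)
    finally show "push A \<phi>1 a (fst q) * push B \<phi>2 b (snd q) = (\<Sum>p\<in>{p\<in>{p\<in>P. g (h p) = \<gamma>}. h p = q}. f p)" .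
  qed
  also have "\<dots> = (\<Sum>p\<in>{p\<in>P. g (h p) = \<gamma>}. f p)"
    by (rule sum.group) (use fP fA fB in \<open>auto simp: P_def h_def\<close>)
  also have "{p\<in>P. g (h p) = \<gamma>} = {p\<in>P. \<phi>3 (g p) = \<gamma>}"
    using hom by (auto simp: P_def g_def h_def)
  finally show ?thesis using L by simp
qed

definition hom :: "nat \<Rightarrow> nat \<Rightarrow> 'a::zero series \<Rightarrow> 'a series" where
  "hom n D f \<beta> = (if monoN (Suc n) \<beta> \<and> mdeg (Suc n) \<beta> = D then f (\<beta>(n := 0)) else 0)"
definition psi :: "nat \<Rightarrow> nat \<Rightarrow> mono \<Rightarrow> mono" where
  "psi n D \<alpha> = \<alpha>(n := D - mdeg n \<alpha>)"

lemma mdeg_Suc: "mdeg (Suc n) \<beta> = mdeg n \<beta> + \<beta> n"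
  unfolding mdeg_def by simp

lemma mdeg_upd: "mdeg n (\<beta>(n := x)) = mdeg n \<beta>"
  unfolding mdeg_def by (rule sum.cong) auto

lemma mdeg_madd: "mdeg N (madd \<alpha> \<beta>) = mdeg N \<alpha> + mdeg N \<beta>"
  unfolding mdeg_def madd_def by (simp add: sum.distrib)

lemma monoN_upd: "monoN n \<alpha> \<Longrightarrow> monoN (Suc n) (\<alpha>(n := x))"
  unfolding monoN_def by auto

lemma monoN_upd0: "monoN (Suc n) \<beta> \<Longrightarrow> monoN n (\<beta>(n := 0))"
  unfolding monoN_def by auto

lemma monoN_n0: "monoN n \<alpha> \<Longrightarrow> \<alpha> n = 0"
  unfolding monoN_def by auto

lemma upd_n0: "monoN n \<alpha> \<Longrightarrow> \<alpha>(n := 0) = \<alpha>"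
  using monoN_n0 by fastforce

lemma monoN_Suc: "monoN n \<alpha> \<Longrightarrow> monoN (Suc n) \<alpha>"
  unfolding monoN_def by auto

lemma hom_push:
  assumes "supp a \<subseteq> A" "\<forall>\<alpha>\<in>A. monoN n \<alpha> \<and> mdeg n \<alpha> \<le> D"
  shows "hom n D a = push A (psi n D) a"
proof
  fix \<beta>
  have sub: "{\<alpha>\<in>A. psi n D \<alpha> = \<beta>} \<subseteq> {\<beta>(n := 0)}"
  proof
    fix \<alpha> assume "\<alpha> \<in> {\<alpha>\<in>A. psi n D \<alpha> = \<beta>}"
    then have "\<alpha> \<in> A" "\<beta> = \<alpha>(n := D - mdeg n \<alpha>)" by (auto simp: psi_def)
    then have "\<beta>(n := 0) = \<alpha>" using assms(2) upd_n0 by fastforce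
    then show "\<alpha> \<in> {\<beta>(n := 0)}" by simp
  qed
  show "hom n D a \<beta> = push A (psi n D) a \<beta>"
  proof (cases "\<beta>(n := 0) \<in> A \<and> psi n D (\<beta>(n := 0)) = \<beta>")
    case True
    then have "{\<alpha>\<in>A. psi n D \<alpha> = \<beta>} = {\<beta>(n := 0)}" using sub by auto
    then have p: "push A (psi n D) a \<beta> = a (\<beta>(n := 0))" by (simp add: push_def)
    have m: "monoN n (\<beta>(n := 0))" "mdeg n (\<beta>(n := 0)) \<le> D" using True assms(2) by auto
    have "\<beta> = (\<beta>(n := 0))(n := D - mdeg n (\<beta>(n := 0)))" using True by (simp add: psi_def)
    then have "monoN (Suc n) \<beta>" "mdeg (Suc n) \<beta> = D"
      using m monoN_upd[OF m(1)] mdeg_Suc[of n \<beta>] mdeg_upd[of n \<beta>] by (metis, metis add_diff_inverse_nat fun_upd_same not_less)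
    then show ?thesis using p by (simp add: hom_def)
  next
    case False
    then have E: "{\<alpha>\<in>A. psi n D \<alpha> = \<beta>} = {}" using sub by auto
    have p: "push A (psi n D) a \<beta> = 0" unfolding push_def E by simp
    have "hom n D a \<beta> = 0"
    proof (rule ccontr)
      assume nz: "hom n D a \<beta> \<noteq> 0"
      then have b: "monoN (Suc n) \<beta>" "mdeg (Suc n) \<beta> = D" "a (\<beta>(n := 0)) \<noteq> 0"
        by (auto simp: hom_def split: if_splits)
      then have "\<beta>(n := 0) \<in> A" using assms(1) by (auto simp: supp_def)
      moreover have "psi n D (\<beta>(n := 0)) = \<beta>"
        using b(2) mdeg_Suc[of n \<beta>] mdeg_upd[of n \<beta>] by (auto simp: psi_def)
      ultimately show False using False by blast
    qed
    then show ?thesis using p by simp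
  qed
qed

lemma poly_supp: "is_poly N a \<Longrightarrow> finite (supp a) \<and> (\<forall>\<alpha>\<in>supp a. monoN N \<alpha>)"
  unfolding is_poly_def supp_def by auto

lemma hom_mult:
  fixes a b :: "'a::comm_ring_1 series"
  assumes pa: "is_poly n a" and pb: "is_poly n b"
    and da: "\<forall>\<alpha>. a \<alpha> \<noteq> 0 \<longrightarrow> mdeg n \<alpha> \<le> D" and db: "\<forall>\<beta>. b \<beta> \<noteq> 0 \<longrightarrow> mdeg n \<beta> \<le> E"
  shows "series_mult (hom n D a) (hom n E b) = hom n (D + E) (series_mult a b)"
proof -
  let ?A = "supp a" let ?B = "supp b"
  have fA: "finite ?A" and mA: "\<forall>\<alpha>\<in>?A. monoN n \<alpha>" using poly_supp[OF pa] by auto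
  have fB: "finite ?B" and mB: "\<forall>\<alpha>\<in>?B. monoN n \<alpha>" using poly_supp[OF pb] by auto
  have h1: "hom n D a = push ?A (psi n D) a" using mA da by (intro hom_push) (auto simp: supp_def)
  have h2: "hom n E b = push ?B (psi n E) b" using mB db by (intro hom_push) (auto simp: supp_def)
  have ms: "\<forall>\<gamma>\<in>msum ?A ?B. monoN n \<gamma> \<and> mdeg n \<gamma> \<le> D + E"
    using mA mB da db unfolding msum_def by (auto simp: supp_def mdeg_madd monoN_madd add_mono)
  have h3: "hom n (D + E) (series_mult a b) = push (msum ?A ?B) (psi n (D + E)) (series_mult a b)"
    by (rule hom_push[OF supp_sm ms]) auto
  have key: "\<forall>\<alpha>\<in>?A. \<forall>\<beta>\<in>?B. psi n (D + E) (madd \<alpha> \<beta>) = madd (psi n D \<alpha>) (psi n E \<beta>)"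
  proof (intro ballI ext)
    fix \<alpha> \<beta> i assume "\<alpha> \<in> ?A" "\<beta> \<in> ?B"
    then have "mdeg n \<alpha> \<le> D" "mdeg n \<beta> \<le> E" "\<alpha> n = 0" "\<beta> n = 0"
      using da db mA mB monoN_n0 by (auto simp: supp_def)
    then show "psi n (D + E) (madd \<alpha> \<beta>) i = madd (psi n D \<alpha>) (psi n E \<beta>) i"
      by (auto simp: psi_def madd_def mdeg_madd[unfolded madd_def])
  qed
  show ?thesis
  proof
    fix \<gamma>
    show "series_mult (hom n D a) (hom n E b) \<gamma> = hom n (D + E) (series_mult a b) \<gamma>"
      unfolding h1 h2 h3
      by (rule push_mult[OF fA fB _ _ mA mB, of _ _ "Suc n", symmetric])
         (use key mA mB monoN_upd in \<open>auto simp: psi_def\<close>)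
  qed
qed

lemma dehomog_push:
  fixes h :: "'a::comm_monoid_add series"
  assumes fA: "finite A" and sA: "supp h \<subseteq> A" and mA: "\<forall>\<beta>\<in>A. monoN (Suc n) \<beta>"
  shows "dehomog n h = push A (\<lambda>\<beta>. \<beta>(n := 0)) h"
proof
  fix \<alpha>
  show "dehomog n h \<alpha> = push A (\<lambda>\<beta>. \<beta>(n := 0)) h \<alpha>"
  proof (cases "monoN n \<alpha>")
    case False
    then have E: "{\<beta>\<in>A. \<beta>(n := 0) = \<alpha>} = {}" using mA monoN_upd0 by blast
    show ?thesis using False unfolding push_def E by (simp add: dehomog_def)
  next
    case True
    let ?U = "{u. h (\<alpha>(n := u)) \<noteq> 0}"
    have inj: "inj_on (\<lambda>u. \<alpha>(n := u)) ?U" by (rule inj_onI) (metis fun_upd_same)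
    have im: "(\<lambda>u. \<alpha>(n := u)) ` ?U \<subseteq> {\<beta>\<in>A. \<beta>(n := 0) = \<alpha>}"
      using sA upd_n0[OF True] by (auto simp: supp_def)
    have "dehomog n h \<alpha> = (\<Sum>u\<in>?U. h (\<alpha>(n := u)))" using True by (simp add: dehomog_def)
    also have "\<dots> = (\<Sum>\<beta>\<in>(\<lambda>u. \<alpha>(n := u)) ` ?U. h \<beta>)" by (simp add: sum.reindex[OF inj])
    also have "\<dots> = (\<Sum>\<beta>\<in>{\<beta>\<in>A. \<beta>(n := 0) = \<alpha>}. h \<beta>)"
    proof (rule sum.mono_neutral_left[OF _ im])
      show "finite {\<beta>\<in>A. \<beta>(n := 0) = \<alpha>}" by (rule finite_subset[OF _ fA]) blast
      show "\<forall>i\<in>{\<beta>\<in>A. \<beta>(n := 0) = \<alpha>} - (\<lambda>u. \<alpha>(n := u)) ` ?U. h i = 0"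
      proof (rule ballI, rule ccontr)
        fix \<beta> assume b: "\<beta> \<in> {\<beta>\<in>A. \<beta>(n := 0) = \<alpha>} - (\<lambda>u. \<alpha>(n := u)) ` ?U" and nz: "h \<beta> \<noteq> 0"
        then have "\<beta> = \<alpha>(n := \<beta> n)" by auto
        then have "\<beta> \<in> (\<lambda>u. \<alpha>(n := u)) ` ?U" using nz by (metis (mono_tags, lifting) image_eqI mem_Collect_eq)
        then show False using b by blast
      qed
    qed
    finally show ?thesis by (simp add: push_def)
  qed
qed

lemma poly_mult:
  fixes a b :: "'a::comm_ring_1 series"
  assumes "is_poly N a" "is_poly N b"
  shows "is_poly N (series_mult a b)"
proof -
  have s: "supp (series_mult a b) \<subseteq> msum (supp a) (supp b)" by (rule supp_sm) auto
  have "finite (msum (supp a) (supp b))"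
    using finite_msum poly_supp[OF assms(1)] poly_supp[OF assms(2)] by simp
  moreover have "\<forall>\<gamma>\<in>msum (supp a) (supp b). monoN N \<gamma>"
    using monoN_msum[of "supp a" N "supp b"] poly_supp[OF assms(1)] poly_supp[OF assms(2)] by simp
  ultimately show ?thesis using s unfolding is_poly_def supp_def by (auto dest: finite_subset)
qed

lemma dehomog_mult:
  fixes a b :: "'a::comm_ring_1 series"
  assumes pa: "is_poly (Suc n) a" and pb: "is_poly (Suc n) b"
  shows "dehomog n (series_mult a b) = series_mult (dehomog n a) (dehomog n b)"
proof
  fix \<gamma>
  let ?A = "supp a" let ?B = "supp b"
  have fA: "finite ?A" and mA: "\<forall>\<alpha>\<in>?A. monoN (Suc n) \<alpha>" using poly_supp[OF pa] by auto
  have fB: "finite ?B" and mB: "\<forall>\<alpha>\<in>?B. monoN (Suc n) \<alpha>" using poly_supp[OF pb] by auto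
  have d1: "dehomog n a = push ?A (\<lambda>\<beta>. \<beta>(n := 0)) a" by (rule dehomog_push[OF fA _ mA]) auto
  have d2: "dehomog n b = push ?B (\<lambda>\<beta>. \<beta>(n := 0)) b" by (rule dehomog_push[OF fB _ mB]) auto
  have d3: "dehomog n (series_mult a b) = push (msum ?A ?B) (\<lambda>\<beta>. \<beta>(n := 0)) (series_mult a b)"
    by (rule dehomog_push[OF finite_msum[OF fA fB] supp_sm monoN_msum[OF mA mB]]) auto
  show "dehomog n (series_mult a b) \<gamma> = series_mult (dehomog n a) (dehomog n b) \<gamma>"
    unfolding d1 d2 d3
    by (rule push_mult[OF fA fB _ _ mA mB, of _ _ n]) (use mA mB monoN_upd0 in \<open>auto simp: madd_def\<close>)
qed

lemma dehomog_single:
  assumes "monoN n \<alpha>" "\<forall>u. h (\<alpha>(n := u)) \<noteq> 0 \<longrightarrow> u = u0"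
  shows "dehomog n h \<alpha> = h (\<alpha>(n := u0))"
proof -
  have sub: "{u. h (\<alpha>(n := u)) \<noteq> 0} \<subseteq> {u0}" using assms(2) by auto
  have "dehomog n h \<alpha> = (\<Sum>u\<in>{u. h (\<alpha>(n := u)) \<noteq> 0}. h (\<alpha>(n := u)))"
    using assms(1) by (simp add: dehomog_def)
  also have "\<dots> = (\<Sum>u\<in>{u0}. h (\<alpha>(n := u)))"
    by (rule sum.mono_neutral_left[OF _ sub]) auto
  finally show ?thesis by simp
qed

lemma dehomog_hom:
  assumes "is_poly n f" "\<forall>\<alpha>. f \<alpha> \<noteq> 0 \<longrightarrow> mdeg n \<alpha> \<le> D"
  shows "dehomog n (hom n D f) = f"
proof
  fix \<alpha>
  show "dehomog n (hom n D f) \<alpha> = f \<alpha>"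
  proof (cases "monoN n \<alpha>")
    case False
    then show ?thesis using assms(1) by (auto simp: dehomog_def is_poly_def)
  next
    case True
    have "\<forall>u. hom n D f (\<alpha>(n := u)) \<noteq> 0 \<longrightarrow> u = D - mdeg n \<alpha>"
      by (auto simp: hom_def mdeg_Suc mdeg_upd split: if_splits)
    then have e: "dehomog n (hom n D f) \<alpha> = hom n D f (\<alpha>(n := D - mdeg n \<alpha>))"
      using dehomog_single[OF True] by blast
    show ?thesis
    proof (cases "mdeg n \<alpha> \<le> D")
      case True
      then show ?thesis using e \<open>monoN n \<alpha>\<close> upd_n0 monoN_upd
        by (auto simp: hom_def mdeg_Suc mdeg_upd)
    next
      case False
      then have "f \<alpha> = 0" using assms(2) by auto
      moreover have "hom n D f (\<alpha>(n := D - mdeg n \<alpha>)) = 0" using False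
        by (auto simp: hom_def mdeg_Suc mdeg_upd)
      ultimately show ?thesis using e by simp
    qed
  qed
qed




section \<open>valuation\<close>

context
  fixes val :: "'a::field \<Rightarrow> int"
  assumes cv: "complete_dvf val"
begin

lemma v_mult: "x \<noteq> 0 \<Longrightarrow> y \<noteq> 0 \<Longrightarrow> val (x * y) = val x + val y"
  using cv unfolding complete_dvf_def by blast

lemma v_add: "x \<noteq> 0 \<Longrightarrow> y \<noteq> 0 \<Longrightarrow> x + y \<noteq> 0 \<Longrightarrow> val (x + y) \<ge> min (val x) (val y)"
  using cv unfolding complete_dvf_def by blast

lemma v_one: "val 1 = 0"
  using v_mult[of 1 1] by simp

lemma v_neg: "x \<noteq> 0 \<Longrightarrow> val (- x) = val x"
proof -
  assume x: "x \<noteq> 0"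
  have "val ((-1) * (-1)) = val (-1) + val (-1)" by (rule v_mult) auto
  then have m1: "val (-1) = 0" using v_one by simp
  have "val ((-1) * x) = val (-1) + val x" by (rule v_mult) (use x in auto)
  then show ?thesis using m1 by simp
qed

lemma v_sum:
  assumes "sum c S \<noteq> 0"
  shows "\<exists>x\<in>S. c x \<noteq> 0 \<and> val (c x) \<le> val (sum c S)"
proof -
  have fin: "finite S" using assms sum.infinite by blast
  show ?thesis using fin assms
  proof (induction S rule: finite_induct)
    case empty then show ?case by simp
  next
    case (insert x F)
    have s: "sum c (insert x F) = c x + sum c F" using insert by simp
    show ?case
    proof (cases "sum c F = 0")
      case True then show ?thesis using s insert by auto
    next
      case False
      then obtain y where y: "y \<in> F" "c y \<noteq> 0" "val (c y) \<le> val (sum c F)" using insert by blast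
      show ?thesis
      proof (cases "c x = 0")
        case True then show ?thesis using s y by auto
      next
        case cx: False
        have m: "val (c x + sum c F) \<ge> min (val (c x)) (val (sum c F))"
          using v_add[OF cx False] insert.prems s by simp
        show ?thesis
        proof (cases "val (c x) \<le> val (sum c F)")
          case True then show ?thesis using m s cx by auto
        next
          case False then show ?thesis using m s y by auto
        qed
      qed
    qed
  qed
qed

lemma v_strict:
  assumes "x \<noteq> 0" "d \<noteq> 0" "val d > val x"
  shows "x + d \<noteq> 0 \<and> val (x + d) = val x"
proof
  show nz: "x + d \<noteq> 0"
  proof
    assume "x + d = 0" then have "d = - x" by (metis add.commute eq_neg_iff_add_eq_0)
    then show False using assms v_neg by auto
  qed
  have "val (x + d) \<ge> min (val x) (val d)" using v_add[OF assms(1,2) nz] .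
  then have ge: "val (x + d) \<ge> val x" using assms(3) by simp
  have "x = (x + d) + (- d)" by simp
  then have "val x \<ge> min (val (x + d)) (val (- d))"
    using v_add[OF nz, of "- d"] assms by (metis add_uminus_conv_diff add_diff_cancel neg_equal_0_iff_equal)
  then have "val (x + d) \<le> val x" using assms v_neg[OF assms(2)] by linarith
  then show "val (x + d) = val x" using ge by simp
qed

end

definition rdot :: "nat \<Rightarrow> (nat \<Rightarrow> rat) \<Rightarrow> mono \<Rightarrow> rat" where
  "rdot N r \<alpha> = (\<Sum>i<N. r i * of_nat (\<alpha> i))"

lemma val_r_rdot: "val_r val N r a \<alpha> = of_int (val a) - rdot N r \<alpha>"
  unfolding val_r_def rdot_def by simp

lemma rdot_madd: "rdot N r (madd \<alpha> \<beta>) = rdot N r \<alpha> + rdot N r \<beta>"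
  unfolding rdot_def madd_def by (simp add: sum.distrib distrib_left)

lemma est:
  fixes val :: "'a::field \<Rightarrow> int"
  assumes cv: "complete_dvf val"
    and nz: "(\<Sum>i<k. series_mult (u i) (g i) \<gamma>) \<noteq> 0"
  shows "\<exists>i<k. \<exists>\<alpha> \<beta>. u i \<alpha> \<noteq> 0 \<and> g i \<beta> \<noteq> 0 \<and> \<gamma> = madd \<alpha> \<beta> \<and>
     val_r val N r (u i \<alpha>) \<alpha> + val_r val N r (g i \<beta>) \<beta> \<le> val_r val N r (\<Sum>i<k. series_mult (u i) (g i) \<gamma>) \<gamma>"
proof -
  obtain i where i: "i \<in> {..<k}" "series_mult (u i) (g i) \<gamma> \<noteq> 0"
    "val (series_mult (u i) (g i) \<gamma>) \<le> val (\<Sum>i<k. series_mult (u i) (g i) \<gamma>)"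
    using v_sum[OF cv nz] by blast
  have "(\<Sum>\<alpha>\<in>{\<alpha>. \<forall>i. \<alpha> i \<le> \<gamma> i}. u i \<alpha> * g i (mminus \<gamma> \<alpha>)) = series_mult (u i) (g i) \<gamma>"
    unfolding series_mult_def mminus_def by simp
  then obtain \<alpha> where a: "\<alpha> \<in> {\<alpha>. \<forall>i. \<alpha> i \<le> \<gamma> i}" "u i \<alpha> * g i (mminus \<gamma> \<alpha>) \<noteq> 0"
    "val (u i \<alpha> * g i (mminus \<gamma> \<alpha>)) \<le> val (series_mult (u i) (g i) \<gamma>)"
    using v_sum[OF cv, of "\<lambda>\<alpha>. u i \<alpha> * g i (mminus \<gamma> \<alpha>)" "{\<alpha>. \<forall>i. \<alpha> i \<le> \<gamma> i}"] i(2) by auto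
  define \<beta> where "\<beta> = mminus \<gamma> \<alpha>"
  have g: "\<gamma> = madd \<alpha> \<beta>" using a(1) madd_mminus unfolding \<beta>_def by auto
  have nz2: "u i \<alpha> \<noteq> 0" "g i \<beta> \<noteq> 0" using a(2) \<beta>_def by auto
  have "val (u i \<alpha> * g i \<beta>) = val (u i \<alpha>) + val (g i \<beta>)" using v_mult[OF cv nz2] .
  then have "val (u i \<alpha>) + val (g i \<beta>) \<le> val (\<Sum>i<k. series_mult (u i) (g i) \<gamma>)"
    using a(3) i(3) \<beta>_def by simp
  then have "val_r val N r (u i \<alpha>) \<alpha> + val_r val N r (g i \<beta>) \<beta> \<le> val_r val N r (\<Sum>i<k. series_mult (u i) (g i) \<gamma>) \<gamma>"
    unfolding val_r_rdot g rdot_madd by simp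
  then show ?thesis using i(1) nz2 g by blast
qed

section \<open>leading monomials\<close>

definition tle :: "('a \<Rightarrow> mono \<Rightarrow> rat) \<Rightarrow> (mono \<Rightarrow> mono \<Rightarrow> bool) \<Rightarrow> 'a \<Rightarrow> mono \<Rightarrow> 'a \<Rightarrow> mono \<Rightarrow> bool" where
  "tle v Q a \<alpha> b \<beta> \<longleftrightarrow> v a \<alpha> > v b \<beta> \<or> (v a \<alpha> = v b \<beta> \<and> Q \<alpha> \<beta>)"

definition sto :: "mono set \<Rightarrow> (mono \<Rightarrow> mono \<Rightarrow> bool) \<Rightarrow> bool" where
  "sto Mon Q \<longleftrightarrow> (\<forall>\<alpha>\<in>Mon. \<not> Q \<alpha> \<alpha>) \<and> (\<forall>\<alpha>\<in>Mon. \<forall>\<beta>\<in>Mon. \<forall>\<gamma>\<in>Mon. Q \<alpha> \<beta> \<longrightarrow> Q \<beta> \<gamma> \<longrightarrow> Q \<alpha> \<gamma>) \<and>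
     (\<forall>\<alpha>\<in>Mon. \<forall>\<beta>\<in>Mon. \<alpha> \<noteq> \<beta> \<longrightarrow> Q \<alpha> \<beta> \<or> Q \<beta> \<alpha>)"

definition ismax :: "('a::zero \<Rightarrow> mono \<Rightarrow> 'a \<Rightarrow> mono \<Rightarrow> bool) \<Rightarrow> 'a series \<Rightarrow> mono \<Rightarrow> bool" where
  "ismax tless f x \<longleftrightarrow> f x \<noteq> 0 \<and> (\<forall>\<beta>. f \<beta> \<noteq> 0 \<longrightarrow> \<beta> \<noteq> x \<longrightarrow> tless (f \<beta>) \<beta> (f x) x)"

lemma lm_eq:
  assumes st: "sto Mon Q" and sm: "\<forall>\<alpha>. f \<alpha> \<noteq> 0 \<longrightarrow> \<alpha> \<in> Mon" and mx: "ismax (tle v Q) f x"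
  shows "lm (tle v Q) f = x"
  unfolding lm_def
proof (rule the_equality)
  show "f x \<noteq> 0 \<and> (\<forall>\<beta>. f \<beta> \<noteq> 0 \<longrightarrow> \<beta> \<noteq> x \<longrightarrow> tle v Q (f \<beta>) \<beta> (f x) x)" using mx ismax_def by metis
next
  fix y assume y: "f y \<noteq> 0 \<and> (\<forall>\<beta>. f \<beta> \<noteq> 0 \<longrightarrow> \<beta> \<noteq> y \<longrightarrow> tle v Q (f \<beta>) \<beta> (f y) y)"
  show "y = x"
  proof (rule ccontr)
    assume ne: "y \<noteq> x"
    have t1: "tle v Q (f y) y (f x) x" using mx ne y unfolding ismax_def by blast
    have t2: "tle v Q (f x) x (f y) y" using mx ne y unfolding ismax_def by blast
    have M: "x \<in> Mon" "y \<in> Mon" using sm mx y unfolding ismax_def by auto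
    have irr: "\<not> Q x x" using st M unfolding sto_def by blast
    have tr: "Q x y \<Longrightarrow> Q y x \<Longrightarrow> Q x x" using st M unfolding sto_def by blast
    show False using t1 t2 irr tr unfolding tle_def by linarith
  qed
qed

lemma finite_max:
  assumes "finite S" "S \<noteq> {}"
    and tr: "\<forall>x\<in>S. \<forall>y\<in>S. \<forall>z\<in>S. R x y \<longrightarrow> R y z \<longrightarrow> R x z"
    and to: "\<forall>x\<in>S. \<forall>y\<in>S. x \<noteq> y \<longrightarrow> R x y \<or> R y x"
  shows "\<exists>m\<in>S. \<forall>x\<in>S. x \<noteq> m \<longrightarrow> R x m"
  using assms
proof (induction S rule: finite_ne_induct)
  case (singleton x) then show ?case by auto
next
  case (insert x F)
  have trF: "\<forall>x\<in>F. \<forall>y\<in>F. \<forall>z\<in>F. R x y \<longrightarrow> R y z \<longrightarrow> R x z" using insert.prems(1) by blast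
  have toF: "\<forall>x\<in>F. \<forall>y\<in>F. x \<noteq> y \<longrightarrow> R x y \<or> R y x" using insert.prems(2) by blast
  obtain m where m: "m \<in> F" "\<forall>y\<in>F. y \<noteq> m \<longrightarrow> R y m" using insert.IH[OF trF toF] by blast
  have xm: "x \<noteq> m" using m(1) insert.hyps by blast
  show ?case
  proof (cases "R x m")
    case True
    have "\<forall>y\<in>insert x F. y \<noteq> m \<longrightarrow> R y m" using True m(2) by blast
    then show ?thesis using m(1) by blast
  next
    case False
    then have Rmx: "R m x" using insert.prems(2) m(1) xm by blast
    have "\<forall>y\<in>insert x F. y \<noteq> x \<longrightarrow> R y x"
    proof (intro ballI impI)
      fix y assume y: "y \<in> insert x F" "y \<noteq> x"
      then have yF: "y \<in> F" by blast
      show "R y x"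
      proof (cases "y = m")
        case True then show ?thesis using Rmx by simp
      next
        case False
        then have "R y m" using m(2) yF by blast
        then show ?thesis using Rmx insert.prems(1) yF m(1) by blast
      qed
    qed
    then show ?thesis by blast
  qed
qed

lemma lm_ex:
  assumes st: "sto Mon Q" and sm: "\<forall>\<alpha>. f \<alpha> \<noteq> 0 \<longrightarrow> \<alpha> \<in> Mon" and nz: "f \<gamma>0 \<noteq> 0"
    and fin: "finite {\<gamma>. f \<gamma> \<noteq> 0 \<and> v (f \<gamma>) \<gamma> \<le> v (f \<gamma>0) \<gamma>0}"
  shows "\<exists>x. ismax (tle v Q) f x"
proof -
  let ?S = "{\<gamma>. f \<gamma> \<noteq> 0 \<and> v (f \<gamma>) \<gamma> \<le> v (f \<gamma>0) \<gamma>0}"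
  let ?R = "\<lambda>x y. tle v Q (f x) x (f y) y"
  have SM: "?S \<subseteq> Mon" using sm by auto
  have "\<exists>m\<in>?S. \<forall>x\<in>?S. x \<noteq> m \<longrightarrow> ?R x m"
  proof (rule finite_max[OF fin])
    show "?S \<noteq> {}" using nz by auto
    show "\<forall>x\<in>?S. \<forall>y\<in>?S. \<forall>z\<in>?S. ?R x y \<longrightarrow> ?R y z \<longrightarrow> ?R x z"
    proof (intro ballI impI)
      fix x y z assume "x \<in> ?S" "y \<in> ?S" "z \<in> ?S" "?R x y" "?R y z"
      then show "?R x z" using st SM unfolding tle_def sto_def by (smt (verit) in_mono order_less_trans)
    qed
    show "\<forall>x\<in>?S. \<forall>y\<in>?S. x \<noteq> y \<longrightarrow> ?R x y \<or> ?R y x"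
    proof (intro ballI impI)
      fix x y assume "x \<in> ?S" "y \<in> ?S" "x \<noteq> y"
      then show "?R x y \<or> ?R y x" using st SM unfolding tle_def sto_def by (meson in_mono linorder_neqE)
    qed
  qed
  then obtain m where m: "m \<in> ?S" "\<forall>x\<in>?S. x \<noteq> m \<longrightarrow> ?R x m" by blast
  have "ismax (tle v Q) f m"
    unfolding ismax_def
  proof (intro conjI allI impI)
    show "f m \<noteq> 0" using m by auto
    fix \<beta> assume b: "f \<beta> \<noteq> 0" "\<beta> \<noteq> m"
    show "?R \<beta> m"
    proof (cases "\<beta> \<in> ?S")
      case True then show ?thesis using m b by auto
    next
      case False
      then have "v (f \<beta>) \<beta> > v (f \<gamma>0) \<gamma>0" using b by auto
      moreover have "v (f m) m \<le> v (f \<gamma>0) \<gamma>0" using m by auto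
      ultimately show ?thesis unfolding tle_def by auto
    qed
  qed
  then show ?thesis by blast
qed




lemma is_poly_sum:
  fixes k :: nat
  assumes "\<forall>i<k. is_poly N (x i)"
  shows "is_poly N (\<lambda>\<gamma>. \<Sum>i<k. x i \<gamma>)"
proof -
  have s: "{\<gamma>. (\<Sum>i<k. x i \<gamma>) \<noteq> 0} \<subseteq> (\<Union>i<k. {\<gamma>. x i \<gamma> \<noteq> 0})"
  proof
    fix \<gamma> assume "\<gamma> \<in> {\<gamma>. (\<Sum>i<k. x i \<gamma>) \<noteq> 0}"
    then have "(\<Sum>i<k. x i \<gamma>) \<noteq> 0" by simp
    then obtain i where "i \<in> {..<k}" "x i \<gamma> \<noteq> 0" by (rule sum.not_neutral_contains_not_neutral)
    then show "\<gamma> \<in> (\<Union>i<k. {\<gamma>. x i \<gamma> \<noteq> 0})" by blast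
  qed
  have fi: "finite {\<gamma>. x i \<gamma> \<noteq> 0}" if "i < k" for i using assms that unfolding is_poly_def by simp
  have "finite (\<Union>i<k. {\<gamma>. x i \<gamma> \<noteq> 0})" by (rule finite_UN_I) (auto intro: fi)
  then have f: "finite {\<gamma>. (\<Sum>i<k. x i \<gamma>) \<noteq> 0}" using s by (rule finite_subset[rotated])
  have m: "monoN N \<gamma>" if nz: "(\<Sum>i<k. x i \<gamma>) \<noteq> 0" for \<gamma>
  proof -
    have "\<gamma> \<in> (\<Union>i<k. {\<gamma>. x i \<gamma> \<noteq> 0})" using s nz by blast
    then obtain i where "i < k" "x i \<gamma> \<noteq> 0" by blast
    then show ?thesis using assms unfolding is_poly_def by simp
  qed
  show ?thesis unfolding is_poly_def using f m by simp
qed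

lemma ideal_poly:
  fixes P :: "'a::comm_ring_1 series set"
  assumes "\<forall>p\<in>P. is_poly N p" "f \<in> poly_ideal N P"
  shows "is_poly N f"
proof -
  from assms(2)[unfolded poly_ideal_def mem_Collect_eq]
  obtain k :: nat and g u where gu: "\<forall>i<k. g i \<in> P \<and> is_poly N (u i)" "f = (\<lambda>\<alpha>. \<Sum>i<k. series_mult (u i) (g i) \<alpha>)"
    by (elim exE conjE) (rule that; assumption)
  have "\<forall>i<k. is_poly N (series_mult (u i) (g i))"
  proof (intro allI impI)
    fix i assume "i < k"
    then show "is_poly N (series_mult (u i) (g i))" by (intro poly_mult) (use gu assms(1) in auto)
  qed
  then show ?thesis unfolding gu(2) by (rule is_poly_sum)
qed

lemma poly_tate: "is_poly N f \<Longrightarrow> tate val N r f"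
  unfolding is_poly_def tate_def by (auto intro: finite_subset[of _ "{\<alpha>. f \<alpha> \<noteq> 0}"])

definition one :: "'a::comm_ring_1 series" where "one = (\<lambda>\<alpha>. if \<alpha> = (\<lambda>_. 0) then 1 else 0)"

lemma sm_one:
  fixes g :: "'a::comm_ring_1 series"
  assumes "is_poly N g"
  shows "series_mult one g = g"
proof
  fix \<gamma>
  have fB: "finite (supp g)" and mB: "\<forall>\<beta>\<in>supp g. monoN N \<beta>" using poly_supp[OF assms] by auto
  have so: "supp (one :: 'a series) \<subseteq> {\<lambda>_. 0}" by (auto simp: supp_def one_def split: if_splits)
  have m0: "\<forall>\<alpha>\<in>{\<lambda>_. 0::nat}. monoN N \<alpha>" by (simp add: monoN_def)
  have "series_mult one g \<gamma> = (\<Sum>p\<in>{p\<in>{\<lambda>_. 0} \<times> supp g. madd (fst p) (snd p) = \<gamma>}. one (fst p) * g (snd p))"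
    by (rule conv[OF _ fB so _ m0 mB]) auto
  also have "{p\<in>{\<lambda>_. 0} \<times> supp g. madd (fst p) (snd p) = \<gamma>} = (if \<gamma> \<in> supp g then {((\<lambda>_. 0), \<gamma>)} else {})"
    by (auto simp: madd_def)
  finally show "series_mult one g \<gamma> = g \<gamma>" by (auto simp: one_def supp_def split: if_splits)
qed

lemma one_tate: "tate val N r (one :: 'a::comm_ring_1 series)"
proof (rule poly_tate)
  have "{\<alpha>. (one::'a series) \<alpha> \<noteq> 0} = {\<lambda>_. 0}" by (auto simp: one_def)
  then show "is_poly N (one :: 'a series)" unfolding is_poly_def by (auto simp: monoN_def one_def)
qed

lemma poly_in_tate_ideal:
  fixes g :: "'a::comm_ring_1 series"
  assumes "g \<in> P" "is_poly N g"
  shows "g \<in> tate_ideal val N r P"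
  unfolding tate_ideal_def
proof (rule CollectI, intro exI conjI)
  show "\<forall>i<Suc 0. (\<lambda>_. g) i \<in> P \<and> tate val N r ((\<lambda>_. one) i)" using assms one_tate[of val N r] by auto
  show "g = (\<lambda>\<alpha>. \<Sum>i<Suc 0. series_mult ((\<lambda>_. one) i) ((\<lambda>_. g) i) \<alpha>)" using sm_one[OF assms(2)] by simp
qed

lemma tate_ideal_tate:
  fixes val :: "'a::field \<Rightarrow> int"
  assumes cv: "complete_dvf val" and PP: "\<forall>p\<in>P. is_poly N p" and f: "f \<in> tate_ideal val N r P"
  shows "tate val N r f"
proof -
  from f[unfolded tate_ideal_def mem_Collect_eq]
  obtain k :: nat and g u where gu: "\<forall>i<k. g i \<in> P \<and> tate val N r (u i)" "f = (\<lambda>\<alpha>. \<Sum>i<k. series_mult (u i) (g i) \<alpha>)"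
    by (elim exE conjE) (rule that; assumption)
  have gp: "\<forall>i<k. is_poly N (g i)" using gu PP by blast
  have E: "\<exists>i<k. \<exists>\<alpha> \<beta>. u i \<alpha> \<noteq> 0 \<and> g i \<beta> \<noteq> 0 \<and> \<gamma> = madd \<alpha> \<beta> \<and>
     val_r val N r (u i \<alpha>) \<alpha> + val_r val N r (g i \<beta>) \<beta> \<le> val_r val N r (f \<gamma>) \<gamma>" if "f \<gamma> \<noteq> 0" for \<gamma>
    using est[OF cv, where k=k and u=u and g=g and \<gamma>=\<gamma> and N=N and r=r] that gu(2) by simp
  have mono: "\<forall>\<gamma>. f \<gamma> \<noteq> 0 \<longrightarrow> monoN N \<gamma>"
  proof (intro allI impI)
    fix \<gamma> assume "f \<gamma> \<noteq> 0"
    then obtain i \<alpha> \<beta> where "i < k" "u i \<alpha> \<noteq> 0" "g i \<beta> \<noteq> 0" "\<gamma> = madd \<alpha> \<beta>" using E by blast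
    then show "monoN N \<gamma>" using gu(1) gp monoN_madd unfolding tate_def is_poly_def by metis
  qed
  have fin: "finite {\<gamma>. f \<gamma> \<noteq> 0 \<and> val_r val N r (f \<gamma>) \<gamma> \<le> M}" for M
  proof -
    let ?T = "\<Union>i<k. \<Union>\<beta>\<in>{\<beta>. g i \<beta> \<noteq> 0}. (\<lambda>\<alpha>. madd \<alpha> \<beta>) ` {\<alpha>. u i \<alpha> \<noteq> 0 \<and> val_r val N r (u i \<alpha>) \<alpha> \<le> M - val_r val N r (g i \<beta>) \<beta>}"
    have "finite ?T"
    proof (intro finite_UN_I)
      show "finite {..<k}" by simp
      fix i assume "i \<in> {..<k}"
      then show "finite {\<beta>. g i \<beta> \<noteq> 0}" using gp unfolding is_poly_def by auto
      fix \<beta>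
      show "finite ((\<lambda>\<alpha>. madd \<alpha> \<beta>) ` {\<alpha>. u i \<alpha> \<noteq> 0 \<and> val_r val N r (u i \<alpha>) \<alpha> \<le> M - val_r val N r (g i \<beta>) \<beta>})"
        using gu(1) \<open>i \<in> {..<k}\<close> unfolding tate_def by blast
    qed
    moreover have "{\<gamma>. f \<gamma> \<noteq> 0 \<and> val_r val N r (f \<gamma>) \<gamma> \<le> M} \<subseteq> ?T"
    proof
      fix \<gamma> assume "\<gamma> \<in> {\<gamma>. f \<gamma> \<noteq> 0 \<and> val_r val N r (f \<gamma>) \<gamma> \<le> M}"
      then have g: "f \<gamma> \<noteq> 0" "val_r val N r (f \<gamma>) \<gamma> \<le> M" by auto
      then obtain i \<alpha> \<beta> where ib: "i < k" "u i \<alpha> \<noteq> 0" "g i \<beta> \<noteq> 0" "\<gamma> = madd \<alpha> \<beta>"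
        "val_r val N r (u i \<alpha>) \<alpha> + val_r val N r (g i \<beta>) \<beta> \<le> val_r val N r (f \<gamma>) \<gamma>" using E by blast
      then have "val_r val N r (u i \<alpha>) \<alpha> \<le> M - val_r val N r (g i \<beta>) \<beta>" using g(2) by simp
      then show "\<gamma> \<in> ?T" using ib by blast
    qed
    ultimately show ?thesis using finite_subset by blast
  qed
  show ?thesis unfolding tate_def using mono fin by blast
qed




lemma push_sum:
  fixes k :: nat
  shows "push A \<phi> (\<lambda>\<beta>. \<Sum>j<k. x j \<beta>) \<gamma> = (\<Sum>j<k. push A \<phi> (x j) \<gamma>)"
  unfolding push_def by (rule sum.swap)

lemma dehomog_sum:
  fixes k :: nat and x :: "nat \<Rightarrow> 'a::comm_monoid_add series"
  assumes "\<forall>j<k. is_poly (Suc n) (x j)"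
  shows "dehomog n (\<lambda>\<beta>. \<Sum>j<k. x j \<beta>) = (\<lambda>\<alpha>. \<Sum>j<k. dehomog n (x j) \<alpha>)"
proof -
  let ?A = "\<Union>j<k. supp (x j)"
  have fA: "finite ?A" using assms unfolding is_poly_def supp_def by auto
  have mA: "\<forall>\<beta>\<in>?A. monoN (Suc n) \<beta>" using assms unfolding is_poly_def supp_def by auto
  have sj: "supp (x j) \<subseteq> ?A" if "j < k" for j using that by auto
  have ss: "supp (\<lambda>\<beta>. \<Sum>j<k. x j \<beta>) \<subseteq> ?A"
  proof
    fix \<beta> assume "\<beta> \<in> supp (\<lambda>\<beta>. \<Sum>j<k. x j \<beta>)"
    then have "(\<Sum>j<k. x j \<beta>) \<noteq> 0" by (simp add: supp_def)
    then obtain j where "j \<in> {..<k}" "x j \<beta> \<noteq> 0" by (rule sum.not_neutral_contains_not_neutral)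
    then show "\<beta> \<in> ?A" by (auto simp: supp_def)
  qed
  have e1: "dehomog n (\<lambda>\<beta>. \<Sum>j<k. x j \<beta>) = push ?A (\<lambda>\<beta>. \<beta>(n := 0)) (\<lambda>\<beta>. \<Sum>j<k. x j \<beta>)"
    by (rule dehomog_push[OF fA ss mA])
  have e2: "dehomog n (x j) = push ?A (\<lambda>\<beta>. \<beta>(n := 0)) (x j)" if "j < k" for j
    by (rule dehomog_push[OF fA sj[OF that] mA])
  show ?thesis unfolding e1 push_sum using e2 by (auto intro!: ext sum.cong)
qed

lemma dehomog_poly:
  fixes w :: "'a::comm_monoid_add series"
  assumes "is_poly (Suc n) w"
  shows "is_poly n (dehomog n w)"
proof -
  have f: "finite (supp w)" and m: "\<forall>\<beta>\<in>supp w. monoN (Suc n) \<beta>" using poly_supp[OF assms] by auto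
  have e: "dehomog n w = push (supp w) (\<lambda>\<beta>. \<beta>(n := 0)) w" by (rule dehomog_push[OF f _ m]) auto
  have S: "supp (dehomog n w) \<subseteq> (\<lambda>\<beta>. \<beta>(n := 0)) ` supp w" unfolding e by (rule supp_push)
  have "finite (supp (dehomog n w))" by (rule finite_surj[OF f S])
  then have "finite {\<alpha>. dehomog n w \<alpha> \<noteq> 0}" unfolding supp_def .
  moreover have "\<forall>\<alpha>. dehomog n w \<alpha> \<noteq> 0 \<longrightarrow> monoN n \<alpha>" by (auto simp: dehomog_def)
  ultimately show ?thesis unfolding is_poly_def by blast
qed

lemma pdeg_bound:
  assumes "is_poly n f" "f \<alpha> \<noteq> 0"
  shows "mdeg n \<alpha> \<le> pdeg n f"
  unfolding pdeg_def by (rule Max_ge) (use assms in \<open>auto simp: is_poly_def\<close>)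

lemma homog_hom: "homog n f = hom n (pdeg n f) f"
  by (intro ext) (simp add: homog_def hom_def)

lemma hom_nz:
  assumes "hom n D f \<beta> \<noteq> 0"
  shows "monoN (Suc n) \<beta> \<and> f (\<beta>(n := 0)) \<noteq> 0 \<and> \<beta> = psi n D (\<beta>(n := 0))"
proof -
  have b: "monoN (Suc n) \<beta>" "mdeg (Suc n) \<beta> = D" "f (\<beta>(n := 0)) \<noteq> 0"
    using assms by (auto simp: hom_def split: if_splits)
  have "\<beta> n = D - mdeg n \<beta>" using b(2) mdeg_Suc[of n \<beta>] by simp
  then have "\<beta> = psi n D (\<beta>(n := 0))" by (auto simp: psi_def mdeg_upd)
  then show ?thesis using b by simp
qed

lemma hom_poly:
  assumes "is_poly n f"
  shows "is_poly (Suc n) (hom n D f)"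
proof -
  have S: "{\<beta>. hom n D f \<beta> \<noteq> 0} \<subseteq> (\<lambda>\<alpha>. psi n D \<alpha>) ` {\<alpha>. f \<alpha> \<noteq> 0}"
  proof
    fix \<beta> assume "\<beta> \<in> {\<beta>. hom n D f \<beta> \<noteq> 0}"
    then have "hom n D f \<beta> \<noteq> 0" by simp
    from hom_nz[OF this] show "\<beta> \<in> (\<lambda>\<alpha>. psi n D \<alpha>) ` {\<alpha>. f \<alpha> \<noteq> 0}" by blast
  qed
  have F: "finite {\<alpha>. f \<alpha> \<noteq> 0}" using assms by (simp add: is_poly_def)
  have "finite {\<beta>. hom n D f \<beta> \<noteq> 0}" by (rule finite_surj[OF F S])
  moreover have "\<forall>\<beta>. hom n D f \<beta> \<noteq> 0 \<longrightarrow> monoN (Suc n) \<beta>" using hom_nz by blast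
  ultimately show ?thesis unfolding is_poly_def by blast
qed

lemma hom_sum:
  fixes k :: nat
  shows "hom n D (\<lambda>\<alpha>. \<Sum>i<k. x i \<alpha>) = (\<lambda>\<beta>. \<Sum>i<k. hom n D (x i) \<beta>)"
proof
  fix \<beta> show "hom n D (\<lambda>\<alpha>. \<Sum>i<k. x i \<alpha>) \<beta> = (\<Sum>i<k. hom n D (x i) \<beta>)"
    by (cases "monoN (Suc n) \<beta> \<and> mdeg (Suc n) \<beta> = D") (auto simp: hom_def)
qed

lemma dehom_ideal:
  fixes P :: "'a::comm_ring_1 series set"
  assumes PP: "\<forall>f\<in>P. is_poly n f" and h: "h \<in> poly_ideal (Suc n) (homog n ` P)"
  shows "dehomog n h \<in> poly_ideal n P"
proof -
  from h[unfolded poly_ideal_def mem_Collect_eq]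
  obtain k :: nat and g w where gw: "\<forall>j<k. g j \<in> homog n ` P \<and> is_poly (Suc n) (w j)"
    "h = (\<lambda>\<alpha>. \<Sum>j<k. series_mult (w j) (g j) \<alpha>)"
    by (elim exE conjE) (rule that; assumption)
  have "\<forall>j. \<exists>f. j < k \<longrightarrow> f \<in> P \<and> g j = homog n f" using gw(1) by blast
  from choice[OF this] obtain f' where f': "\<forall>j. j < k \<longrightarrow> f' j \<in> P \<and> g j = homog n (f' j)" by blast
  have pf: "is_poly n (f' j)" if "j < k" for j using f' PP that by blast
  have pg: "is_poly (Suc n) (g j)" if "j < k" for j
    using f' that hom_poly[OF pf[OF that]] homog_hom by metis
  have pw: "is_poly (Suc n) (w j)" if "j < k" for j using gw(1) that by blast
  have dg: "dehomog n (g j) = f' j" if "j < k" for j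
    using f' that homog_hom dehomog_hom[OF pf[OF that]] pdeg_bound[OF pf[OF that]] by metis
  have "dehomog n h = (\<lambda>\<alpha>. \<Sum>j<k. dehomog n (series_mult (w j) (g j)) \<alpha>)"
    unfolding gw(2) by (rule dehomog_sum) (auto intro: poly_mult pw pg)
  also have "\<dots> = (\<lambda>\<alpha>. \<Sum>j<k. series_mult (dehomog n (w j)) (f' j) \<alpha>)"
  proof (intro ext sum.cong refl)
    fix \<alpha> j assume "j \<in> {..<k}"
    then have j: "j < k" by simp
    show "dehomog n (series_mult (w j) (g j)) \<alpha> = series_mult (dehomog n (w j)) (f' j) \<alpha>"
      unfolding dehomog_mult[OF pw[OF j] pg[OF j]] dg[OF j] ..
  qed
  finally have e: "dehomog n h = (\<lambda>\<alpha>. \<Sum>j<k. series_mult (dehomog n (w j)) (f' j) \<alpha>)" .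
  have A: "\<forall>j<k. f' j \<in> P \<and> is_poly n (dehomog n (w j))"
  proof (intro allI impI conjI)
    fix j assume j: "j < k"
    show "f' j \<in> P" using f' j by blast
    show "is_poly n (dehomog n (w j))" by (rule dehomog_poly[OF pw[OF j]])
  qed
  show ?thesis unfolding poly_ideal_def mem_Collect_eq e
    by (rule exI[of _ k], rule exI[of _ f'], rule exI[of _ "\<lambda>j. dehomog n (w j)"]) (simp add: A)
qed

definition dgb :: "nat \<Rightarrow> 'a::zero series \<Rightarrow> nat" where
  "dgb N a = Max (insert 0 (mdeg N ` supp a))"

lemma dgb_bound:
  assumes "is_poly N a" "a \<alpha> \<noteq> 0"
  shows "mdeg N \<alpha> \<le> dgb N a"
  unfolding dgb_def by (rule Max_ge) (use assms in \<open>auto simp: is_poly_def supp_def\<close>)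

lemma hom_ideal:
  fixes P :: "'a::comm_ring_1 series set"
  assumes PP: "\<forall>f\<in>P. is_poly n f" and g: "g \<in> poly_ideal n P"
  shows "\<exists>D0. (\<forall>\<alpha>. g \<alpha> \<noteq> 0 \<longrightarrow> mdeg n \<alpha> \<le> D0) \<and> (\<forall>D\<ge>D0. hom n D g \<in> poly_ideal (Suc n) (homog n ` P))"
proof -
  from g[unfolded poly_ideal_def mem_Collect_eq]
  obtain m :: nat and f' w where fw: "\<forall>j<m. f' j \<in> P \<and> is_poly n (w j)"
    "g = (\<lambda>\<alpha>. \<Sum>j<m. series_mult (w j) (f' j) \<alpha>)"
    by (elim exE conjE) (rule that; assumption)
  have pg: "is_poly n g" by (rule ideal_poly[OF PP g])
  define D0 where "D0 = dgb n g + (\<Sum>j<m. dgb n (w j) + pdeg n (f' j))"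
  have b1: "\<forall>\<alpha>. g \<alpha> \<noteq> 0 \<longrightarrow> mdeg n \<alpha> \<le> D0"
    using dgb_bound[OF pg] unfolding D0_def by (meson le_add1 le_trans)
  have b2: "dgb n (w j) + pdeg n (f' j) \<le> D0" if "j < m" for j
  proof -
    have "dgb n (w j) + pdeg n (f' j) \<le> (\<Sum>j<m. dgb n (w j) + pdeg n (f' j))"
      by (rule member_le_sum[of j "{..<m}" "\<lambda>j. dgb n (w j) + pdeg n (f' j)"]) (use that in auto)
    then show ?thesis unfolding D0_def by linarith
  qed
  have "hom n D g \<in> poly_ideal (Suc n) (homog n ` P)" if D: "D \<ge> D0" for D
  proof -
    have pf: "is_poly n (f' j)" if "j < m" for j using fw PP that by blast
    have pw: "is_poly n (w j)" if "j < m" for j using fw that by blast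
    have e: "hom n D (series_mult (w j) (f' j)) =
        series_mult (hom n (D - pdeg n (f' j)) (w j)) (homog n (f' j))" if j: "j < m" for j
    proof -
      have le: "pdeg n (f' j) \<le> D" "dgb n (w j) \<le> D - pdeg n (f' j)" using b2[OF j] D by auto
      have "series_mult (hom n (D - pdeg n (f' j)) (w j)) (hom n (pdeg n (f' j)) (f' j)) =
          hom n (D - pdeg n (f' j) + pdeg n (f' j)) (series_mult (w j) (f' j))"
      proof (rule hom_mult[OF pw[OF j] pf[OF j]])
        show "\<forall>\<alpha>. w j \<alpha> \<noteq> 0 \<longrightarrow> mdeg n \<alpha> \<le> D - pdeg n (f' j)"
          using dgb_bound[OF pw[OF j]] le(2) le_trans by blast
        show "\<forall>\<beta>. f' j \<beta> \<noteq> 0 \<longrightarrow> mdeg n \<beta> \<le> pdeg n (f' j)" using pdeg_bound[OF pf[OF j]] by blast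
      qed
      then show ?thesis using le(1) homog_hom[of n "f' j"] by simp
    qed
    have E: "hom n D g = (\<lambda>\<beta>. \<Sum>j<m. series_mult (hom n (D - pdeg n (f' j)) (w j)) (homog n (f' j)) \<beta>)"
      unfolding fw(2) hom_sum using e by (auto intro!: ext sum.cong)
    show ?thesis unfolding poly_ideal_def mem_Collect_eq E
    proof (rule exI[of _ m], rule exI[of _ "\<lambda>j. homog n (f' j)"], rule exI[of _ "\<lambda>j. hom n (D - pdeg n (f' j)) (w j)"], intro conjI allI impI refl)
      fix j assume j: "j < m"
      show "homog n (f' j) \<in> homog n ` P" using fw j by blast
      show "is_poly (Suc n) (hom n (D - pdeg n (f' j)) (w j))" by (rule hom_poly[OF pw[OF j]])
    qed
  qed
  then show ?thesis using b1 by blast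
qed

definition Q0 :: "nat \<Rightarrow> (mono \<Rightarrow> mono \<Rightarrow> bool) \<Rightarrow> mono \<Rightarrow> mono \<Rightarrow> bool" where
  "Q0 n mless \<alpha> \<beta> \<longleftrightarrow> mdeg (Suc n) \<alpha> < mdeg (Suc n) \<beta> \<or>
     (mdeg (Suc n) \<alpha> = mdeg (Suc n) \<beta> \<and> mless (\<alpha>(n := 0)) (\<beta>(n := 0)))"

lemma ord_rm_tl: "ord_rm val n r mless = tle (val_r val n r) mless"
  by (intro ext) (simp add: ord_rm_def tle_def)

lemma ord_r0m_tl: "ord_r0m val n r mless = tle (val_r val n r) (Q0 n mless)"
  by (intro ext) (auto simp: ord_r0m_def tle_def Q0_def)

lemma sto_m: "monomial_order n mless \<Longrightarrow> sto {\<alpha>. monoN n \<alpha>} mless"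
  unfolding monomial_order_def sto_def by blast

lemma sto_Q0:
  assumes mo: "monomial_order n mless"
  shows "sto {\<alpha>. monoN (Suc n) \<alpha>} (Q0 n mless)"
proof -
  have irr: "\<forall>\<alpha>. monoN n \<alpha> \<longrightarrow> \<not> mless \<alpha> \<alpha>" using mo unfolding monomial_order_def by blast
  have tr: "\<forall>\<alpha> \<beta> \<gamma>. monoN n \<alpha> \<longrightarrow> monoN n \<beta> \<longrightarrow> monoN n \<gamma> \<longrightarrow> mless \<alpha> \<beta> \<longrightarrow> mless \<beta> \<gamma> \<longrightarrow> mless \<alpha> \<gamma>"
    using mo unfolding monomial_order_def by blast
  have to: "\<forall>\<alpha> \<beta>. monoN n \<alpha> \<longrightarrow> monoN n \<beta> \<longrightarrow> \<alpha> \<noteq> \<beta> \<longrightarrow> mless \<alpha> \<beta> \<or> mless \<beta> \<alpha>"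
    using mo unfolding monomial_order_def by blast
  show ?thesis unfolding sto_def
  proof (intro conjI ballI impI)
    fix \<alpha> assume "\<alpha> \<in> {\<alpha>. monoN (Suc n) \<alpha>}"
    then show "\<not> Q0 n mless \<alpha> \<alpha>" using irr monoN_upd0 unfolding Q0_def by auto
  next
    fix \<alpha> \<beta> \<gamma> assume m: "\<alpha> \<in> {\<alpha>. monoN (Suc n) \<alpha>}" "\<beta> \<in> {\<alpha>. monoN (Suc n) \<alpha>}" "\<gamma> \<in> {\<alpha>. monoN (Suc n) \<alpha>}"
      and q: "Q0 n mless \<alpha> \<beta>" "Q0 n mless \<beta> \<gamma>"
    have "monoN n (\<alpha>(n := 0))" "monoN n (\<beta>(n := 0))" "monoN n (\<gamma>(n := 0))" using m monoN_upd0 by auto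
    then show "Q0 n mless \<alpha> \<gamma>" using q tr unfolding Q0_def by (metis less_trans)
  next
    fix \<alpha> \<beta> assume m: "\<alpha> \<in> {\<alpha>. monoN (Suc n) \<alpha>}" "\<beta> \<in> {\<alpha>. monoN (Suc n) \<alpha>}" and ne: "\<alpha> \<noteq> \<beta>"
    have mm: "monoN n (\<alpha>(n := 0))" "monoN n (\<beta>(n := 0))" using m monoN_upd0 by auto
    show "Q0 n mless \<alpha> \<beta> \<or> Q0 n mless \<beta> \<alpha>"
    proof (cases "mdeg (Suc n) \<alpha> = mdeg (Suc n) \<beta>")
      case False then show ?thesis unfolding Q0_def by linarith
    next
      case True
      have "\<alpha>(n := 0) \<noteq> \<beta>(n := 0)"
      proof
        assume e: "\<alpha>(n := 0) = \<beta>(n := 0)"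
        then have "mdeg n \<alpha> = mdeg n \<beta>" using mdeg_upd by metis
        then have "\<alpha> n = \<beta> n" using True mdeg_Suc[of n \<alpha>] mdeg_Suc[of n \<beta>] by simp
        then have "\<alpha> i = \<beta> i" for i using fun_cong[OF e, of i] by (cases "i = n") auto
        then have "\<alpha> = \<beta>" by blast
        then show False using ne by simp
      qed
      then have "mless (\<alpha>(n := 0)) (\<beta>(n := 0)) \<or> mless (\<beta>(n := 0)) (\<alpha>(n := 0))"
        using to mm by blast
      then show ?thesis unfolding Q0_def using True by simp
    qed
  qed
qed




lemma sm_diff:
  fixes a b g :: "'a::comm_ring_1 series"
  shows "series_mult a g \<gamma> - series_mult b g \<gamma> = series_mult (\<lambda>\<alpha>. a \<alpha> - b \<alpha>) g \<gamma>"
  unfolding series_mult_def by (simp add: sum_subtractf[symmetric] left_diff_distrib)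

lemma rdot_upd: "rdot n r (\<alpha>(n := u)) = rdot n r \<alpha>"
  unfolding rdot_def by (rule sum.cong) auto

lemma vr_upd: "val_r val n r a (\<alpha>(n := u)) = val_r val n r a \<alpha>"
  unfolding val_r_rdot rdot_upd ..

context
  fixes val :: "'a::field \<Rightarrow> int"
  assumes cv: "complete_dvf val"
begin

lemma vr_neg: "x \<noteq> 0 \<Longrightarrow> val_r val N r (- x) \<alpha> = val_r val N r x \<alpha>"
  unfolding val_r_rdot using v_neg[OF cv] by simp

lemma vr_strict:
  assumes "a \<noteq> 0" "d \<noteq> 0" "val_r val N r d \<alpha> > val_r val N r a \<alpha>"
  shows "a + d \<noteq> 0 \<and> val_r val N r (a + d) \<alpha> = val_r val N r a \<alpha>"
proof -
  have "val d > val a" using assms(3) unfolding val_r_rdot by simp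
  then show ?thesis using v_strict[OF cv assms(1,2)] unfolding val_r_rdot by simp
qed

lemma vr_add:
  assumes "a \<noteq> 0" "d \<noteq> 0" "a + d \<noteq> 0"
  shows "val_r val N r (a + d) \<alpha> \<ge> min (val_r val N r a \<alpha>) (val_r val N r d \<alpha>)"
proof -
  have "val (a + d) \<ge> min (val a) (val d)" by (rule v_add[OF cv assms])
  then show ?thesis unfolding val_r_rdot by (simp add: min_def split: if_splits)
qed

end


theorem mainTheorem6:
  fixes val :: "'a::field \<Rightarrow> int"
    and n :: nat
    and F :: "'a series list"
    and r :: "nat \<Rightarrow> rat"
    and mless :: "mono \<Rightarrow> mono \<Rightarrow> bool"
    and H :: "'a series list"
  assumes "complete_dvf val"
    and "\<forall>f\<in>set F. is_poly n f"
    and "monomial_order n mless"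
    and "\<forall>h\<in>set H. is_poly (Suc n) h \<and> homogeneous (Suc n) h \<and>
                    h \<in> poly_ideal (Suc n) (homog n ` set F)"
    and "is_GB (ord_r0m val n r mless)
           (tate_ideal val (Suc n) (r(n := 0)) (poly_ideal (Suc n) (homog n ` set F))) (set H)"
  shows "is_local_GB val n r mless (poly_ideal n (set F)) (dehomog n ` set H)"
proof -
  note cv = assms(1)
  define I where "I = poly_ideal n (set F)"
  define J0 where "J0 = poly_ideal (Suc n) (homog n ` set F)"
  define vr where "vr = val_r val n r"
  have PF: "\<forall>f\<in>set F. is_poly n f" using assms(2) .
  have PI: "\<forall>g\<in>I. is_poly n g" using ideal_poly[OF PF] I_def by blast
  have HP: "\<forall>h\<in>set H. is_poly (Suc n) h \<and> homogeneous (Suc n) h \<and> h \<in> J0" using assms(4) J0_def by simp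
  have GB: "is_GB (ord_r0m val n r mless) (tate_ideal val (Suc n) (r(n := 0)) J0) (set H)"
    using assms(5) J0_def by simp
  have stom: "sto {\<alpha>. monoN n \<alpha>} mless" by (rule sto_m[OF assms(3)])
  have sto0: "sto {\<alpha>. monoN (Suc n) \<alpha>} (Q0 n mless)" by (rule sto_Q0[OF assms(3)])
  have ordm: "ord_rm val n r mless = tle vr mless" unfolding vr_def by (rule ord_rm_tl)
  have ord0: "ord_r0m val n r mless = tle vr (Q0 n mless)" unfolding vr_def by (rule ord_r0m_tl)
  have sub1: "dehomog n ` set H \<subseteq> I"
  proof
    fix g assume "g \<in> dehomog n ` set H"
    then obtain h where "h \<in> set H" "g = dehomog n h" by blast
    then show "g \<in> I" unfolding I_def using dehom_ideal[OF PF] HP J0_def by blast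
  qed
  have sub2: "dehomog n ` set H \<subseteq> tate_ideal val n r I"
  proof
    fix g assume g: "g \<in> dehomog n ` set H"
    then obtain h where "h \<in> set H" "g = dehomog n h" by blast
    then have "is_poly n g" using HP dehomog_poly by blast
    then show "g \<in> tate_ideal val n r I" using poly_in_tate_ideal sub1 g by blast
  qed
  have main: "\<exists>g\<in>dehomog n ` set H. g \<noteq> zero_series \<and>
      mono_dvd (lm (ord_rm val n r mless) g) (lm (ord_rm val n r mless) f)"
    if fT: "f \<in> tate_ideal val n r I" and fnz: "f \<noteq> zero_series" for f
  proof -
    from fT[unfolded tate_ideal_def mem_Collect_eq]
    obtain k :: nat and g u where gu: "\<forall>i<k. g i \<in> I \<and> tate val n r (u i)"
      "f = (\<lambda>\<alpha>. \<Sum>i<k. series_mult (u i) (g i) \<alpha>)"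
      by (elim exE conjE) (rule that; assumption)
    have gp: "is_poly n (g i)" if "i < k" for i using gu(1) PI that by blast
    have ut: "tate val n r (u i)" if "i < k" for i using gu(1) that by blast
    have ft: "tate val n r f" by (rule tate_ideal_tate[OF cv PI fT])
    obtain \<gamma>0 where g0: "f \<gamma>0 \<noteq> 0" using fnz unfolding zero_series_def by blast
    have fmono: "\<forall>\<alpha>. f \<alpha> \<noteq> 0 \<longrightarrow> \<alpha> \<in> {\<alpha>. monoN n \<alpha>}" using ft unfolding tate_def by blast
    obtain \<gamma>f where mf: "ismax (tle vr mless) f \<gamma>f"
      using lm_ex[OF stom fmono g0] ft unfolding tate_def vr_def by blast
    have lmf: "lm (ord_rm val n r mless) f = \<gamma>f" unfolding ordm by (rule lm_eq[OF stom fmono mf])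
    have f\<gamma>f: "f \<gamma>f \<noteq> 0" using mf unfolding ismax_def by blast
    define V where "V = vr (f \<gamma>f) \<gamma>f"
    define Gv where "Gv = (\<Union>i<k. (\<lambda>\<beta>. vr (g i \<beta>) \<beta>) ` {\<beta>. g i \<beta> \<noteq> 0})"
    have fGv: "finite Gv" unfolding Gv_def using gp by (auto simp: is_poly_def)
    define M where "M = V - Min (insert 0 Gv)"
    have Mb: "V \<le> M + vr (g i \<beta>) \<beta>" if "i < k" "g i \<beta> \<noteq> 0" for i \<beta>
    proof -
      have "vr (g i \<beta>) \<beta> \<in> Gv" unfolding Gv_def using that by blast
      then have "Min (insert 0 Gv) \<le> vr (g i \<beta>) \<beta>" using fGv by simp
      then show ?thesis unfolding M_def by simp
    qed
    define tu where "tu i \<alpha> = (if vr (u i \<alpha>) \<alpha> \<le> M then u i \<alpha> else 0)" for i \<alpha>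
    have tup: "is_poly n (tu i)" if "i < k" for i
    proof -
      have "{\<alpha>. tu i \<alpha> \<noteq> 0} \<subseteq> {\<alpha>. u i \<alpha> \<noteq> 0 \<and> val_r val n r (u i \<alpha>) \<alpha> \<le> M}"
        unfolding tu_def vr_def by auto
      moreover have "finite {\<alpha>. u i \<alpha> \<noteq> 0 \<and> val_r val n r (u i \<alpha>) \<alpha> \<le> M}"
        using ut[OF that] unfolding tate_def by blast
      ultimately have "finite {\<alpha>. tu i \<alpha> \<noteq> 0}" by (rule finite_subset)
      moreover have "\<forall>\<alpha>. tu i \<alpha> \<noteq> 0 \<longrightarrow> monoN n \<alpha>"
        using ut[OF that] unfolding tate_def tu_def by auto
      ultimately show ?thesis unfolding is_poly_def by blast
    qed
    define p where "p = (\<lambda>\<gamma>. \<Sum>i<k. series_mult (tu i) (g i) \<gamma>)"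
    have pp: "is_poly n p" unfolding p_def by (rule is_poly_sum) (use poly_mult tup gp in blast)
    have A: "vr (p \<gamma> - f \<gamma>) \<gamma> > V" if ne: "p \<gamma> \<noteq> f \<gamma>" for \<gamma>
    proof -
      define du where "du i \<alpha> = tu i \<alpha> - u i \<alpha>" for i \<alpha>
      have e: "p \<gamma> - f \<gamma> = (\<Sum>i<k. series_mult (du i) (g i) \<gamma>)"
        unfolding p_def gu(2) du_def by (simp add: sum_subtractf[symmetric] sm_diff)
      have nz: "(\<Sum>i<k. series_mult (du i) (g i) \<gamma>) \<noteq> 0" using ne unfolding e[symmetric] by simp
      obtain i \<alpha> \<beta> where ib: "i < k" "du i \<alpha> \<noteq> 0" "g i \<beta> \<noteq> 0" "\<gamma> = madd \<alpha> \<beta>"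
        "vr (du i \<alpha>) \<alpha> + vr (g i \<beta>) \<beta> \<le> vr (\<Sum>i<k. series_mult (du i) (g i) \<gamma>) \<gamma>"
        using est[OF cv nz, of n r] unfolding vr_def by blast
      have big: "\<not> vr (u i \<alpha>) \<alpha> \<le> M" using ib(2) unfolding du_def tu_def by auto
      then have "du i \<alpha> = - u i \<alpha>" unfolding du_def tu_def by simp
      moreover have "u i \<alpha> \<noteq> 0" using ib(2) big unfolding du_def tu_def by auto
      ultimately have "vr (du i \<alpha>) \<alpha> = vr (u i \<alpha>) \<alpha>" unfolding vr_def using vr_neg[OF cv] by simp
      then have "vr (du i \<alpha>) \<alpha> > M" using big by simp
      then have "vr (p \<gamma> - f \<gamma>) \<gamma> > M + vr (g i \<beta>) \<beta>" using ib(5) e by simp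
      then show ?thesis using Mb[OF ib(1,3)] by simp
    qed
    have P1: "p \<gamma>f \<noteq> 0 \<and> vr (p \<gamma>f) \<gamma>f = V"
    proof (cases "p \<gamma>f = f \<gamma>f")
      case True then show ?thesis using f\<gamma>f V_def by simp
    next
      case False
      have d: "p \<gamma>f - f \<gamma>f \<noteq> 0" "vr (p \<gamma>f - f \<gamma>f) \<gamma>f > vr (f \<gamma>f) \<gamma>f" using False A V_def by auto
      have "f \<gamma>f + (p \<gamma>f - f \<gamma>f) \<noteq> 0 \<and> vr (f \<gamma>f + (p \<gamma>f - f \<gamma>f)) \<gamma>f = vr (f \<gamma>f) \<gamma>f"
        using vr_strict[OF cv f\<gamma>f d(1)] d(2) unfolding vr_def by blast
      then show ?thesis using V_def by simp
    qed
    have mp: "ismax (tle vr mless) p \<gamma>f"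
      unfolding ismax_def
    proof (intro conjI allI impI)
      show "p \<gamma>f \<noteq> 0" using P1 by simp
      fix \<beta> assume b: "p \<beta> \<noteq> 0" "\<beta> \<noteq> \<gamma>f"
      have goal: "vr (p \<beta>) \<beta> > V \<or> (vr (p \<beta>) \<beta> = V \<and> mless \<beta> \<gamma>f)"
      proof (cases "p \<beta> = f \<beta>")
        case True
        then have "f \<beta> \<noteq> 0" using b by simp
        then have "tle vr mless (f \<beta>) \<beta> (f \<gamma>f) \<gamma>f" using mf b(2) unfolding ismax_def by blast
        then show ?thesis using True V_def unfolding tle_def by simp
      next
        case False
        define d where "d = p \<beta> - f \<beta>"
        have d: "d \<noteq> 0" "vr d \<beta> > V" using False A d_def by auto
        have pd: "p \<beta> = f \<beta> + d" unfolding d_def by simp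
        show ?thesis
        proof (cases "f \<beta> = 0")
          case True then show ?thesis using pd d by simp
        next
          case fnz: False
          have tf: "vr (f \<beta>) \<beta> > V \<or> (vr (f \<beta>) \<beta> = V \<and> mless \<beta> \<gamma>f)"
            using mf b(2) fnz unfolding ismax_def tle_def V_def by blast
          show ?thesis
          proof (cases "vr d \<beta> > vr (f \<beta>) \<beta>")
            case True
            then have "vr (f \<beta> + d) \<beta> = vr (f \<beta>) \<beta>" using vr_strict[OF cv fnz d(1)] unfolding vr_def by blast
            then show ?thesis using tf pd by simp
          next
            case False
            then have "vr (f \<beta>) \<beta> > V" using d(2) by simp
            moreover have "vr (f \<beta> + d) \<beta> \<ge> min (vr (f \<beta>) \<beta>) (vr d \<beta>)"
              using vr_add[OF cv fnz d(1)] pd b(1) unfolding vr_def by simp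
            ultimately have "vr (f \<beta> + d) \<beta> > V" using d(2) by (auto simp: min_def split: if_splits)
            then show ?thesis using pd by simp
          qed
        qed
      qed
      then show "tle vr mless (p \<beta>) \<beta> (p \<gamma>f) \<gamma>f" using P1 unfolding tle_def by simp
    qed
    have pmono: "\<forall>\<alpha>. p \<alpha> \<noteq> 0 \<longrightarrow> \<alpha> \<in> {\<alpha>. monoN n \<alpha>}" using pp unfolding is_poly_def by blast
    have mgf: "monoN n \<gamma>f" using fmono f\<gamma>f by blast
    have "\<forall>i. \<exists>D0. i < k \<longrightarrow> ((\<forall>\<alpha>. g i \<alpha> \<noteq> 0 \<longrightarrow> mdeg n \<alpha> \<le> D0) \<and> (\<forall>D\<ge>D0. hom n D (g i) \<in> J0))"
    proof
      fix i show "\<exists>D0. i < k \<longrightarrow> ((\<forall>\<alpha>. g i \<alpha> \<noteq> 0 \<longrightarrow> mdeg n \<alpha> \<le> D0) \<and> (\<forall>D\<ge>D0. hom n D (g i) \<in> J0))"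
      proof (cases "i < k")
        case True
        then have "g i \<in> poly_ideal n (set F)" using gu(1) I_def by blast
        from hom_ideal[OF PF this] show ?thesis unfolding J0_def by blast
      qed simp
    qed
    from choice[OF this] obtain Dg where Dg: "\<forall>i. i < k \<longrightarrow> ((\<forall>\<alpha>. g i \<alpha> \<noteq> 0 \<longrightarrow> mdeg n \<alpha> \<le> Dg i) \<and> (\<forall>D\<ge>Dg i. hom n D (g i) \<in> J0))"
      by blast
    define E where "E i = dgb n (tu i)" for i
    define C where "C = (\<Sum>i<k. Dg i + E i)"
    have CE: "Dg i + E i \<le> C" if "i < k" for i
      unfolding C_def by (rule member_le_sum[of i "{..<k}" "\<lambda>i. Dg i + E i"]) (use that in auto)
    have homC: "hom n C (series_mult (tu i) (g i)) = series_mult (hom n (E i) (tu i)) (hom n (C - E i) (g i))"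
      if i: "i < k" for i
    proof -
      have "series_mult (hom n (E i) (tu i)) (hom n (C - E i) (g i)) = hom n (E i + (C - E i)) (series_mult (tu i) (g i))"
      proof (rule hom_mult[OF tup[OF i] gp[OF i]])
        show "\<forall>\<alpha>. tu i \<alpha> \<noteq> 0 \<longrightarrow> mdeg n \<alpha> \<le> E i" unfolding E_def using dgb_bound[OF tup[OF i]] by blast
        show "\<forall>\<beta>. g i \<beta> \<noteq> 0 \<longrightarrow> mdeg n \<beta> \<le> C - E i" using Dg CE[OF i] i by fastforce
      qed
      moreover have "E i + (C - E i) = C" using CE[OF i] by simp
      ultimately show ?thesis by simp
    qed
    have PC: "hom n C p = (\<lambda>\<beta>. \<Sum>i<k. series_mult (hom n (E i) (tu i)) (hom n (C - E i) (g i)) \<beta>)"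
      unfolding p_def hom_sum by (intro ext sum.cong refl) (simp add: homC)
    have PJ: "hom n C p \<in> tate_ideal val (Suc n) (r(n := 0)) J0"
      unfolding tate_ideal_def mem_Collect_eq PC
    proof (rule exI[of _ k], rule exI[of _ "\<lambda>i. hom n (C - E i) (g i)"], rule exI[of _ "\<lambda>i. hom n (E i) (tu i)"], intro conjI allI impI refl)
      fix i assume i: "i < k"
      show "hom n (C - E i) (g i) \<in> J0" using Dg CE[OF i] i by auto
      show "tate val (Suc n) (r(n := 0)) (hom n (E i) (tu i))" by (rule poly_tate[OF hom_poly[OF tup[OF i]]])
    qed
    have pdegC: "mdeg n \<gamma> \<le> C" if nz: "p \<gamma> \<noteq> 0" for \<gamma>
    proof -
      obtain i where i: "i \<in> {..<k}" "series_mult (tu i) (g i) \<gamma> \<noteq> 0"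
        using nz unfolding p_def by (rule sum.not_neutral_contains_not_neutral)
      obtain \<alpha> where a: "\<forall>j. \<alpha> j \<le> \<gamma> j" "tu i \<alpha> \<noteq> 0" "g i (mminus \<gamma> \<alpha>) \<noteq> 0" using sm_nz[OF i(2)] by blast
      have "mdeg n \<gamma> = mdeg n \<alpha> + mdeg n (mminus \<gamma> \<alpha>)" using madd_mminus[OF a(1)] mdeg_madd by metis
      moreover have "mdeg n \<alpha> \<le> E i" unfolding E_def using dgb_bound[OF tup a(2)] i by simp
      moreover have "mdeg n (mminus \<gamma> \<alpha>) \<le> Dg i" using Dg a(3) i by auto
      ultimately show ?thesis using CE[of i] i by simp
    qed
    define P where "P = hom n C p"
    define \<beta>s where "\<beta>s = \<gamma>f(n := C - mdeg n \<gamma>f)"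
    have dgf: "mdeg n \<gamma>f \<le> C" using pdegC P1 by blast
    have bs0: "\<beta>s(n := 0) = \<gamma>f" unfolding \<beta>s_def using upd_n0[OF mgf] by simp
    have bsm: "monoN (Suc n) \<beta>s" unfolding \<beta>s_def by (rule monoN_upd[OF mgf])
    have bsd: "mdeg (Suc n) \<beta>s = C" unfolding \<beta>s_def mdeg_Suc mdeg_upd using dgf by simp
    have Pbs: "P \<beta>s = p \<gamma>f" unfolding P_def hom_def using bsm bsd bs0 by simp
    have Pmono: "\<forall>\<beta>. P \<beta> \<noteq> 0 \<longrightarrow> \<beta> \<in> {\<alpha>. monoN (Suc n) \<alpha>}" unfolding P_def using hom_nz by blast
    have mP: "ismax (tle vr (Q0 n mless)) P \<beta>s"
      unfolding ismax_def
    proof (intro conjI allI impI)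
      show "P \<beta>s \<noteq> 0" using Pbs P1 by simp
      fix \<beta> assume b: "P \<beta> \<noteq> 0" "\<beta> \<noteq> \<beta>s"
      have h: "monoN (Suc n) \<beta>" "mdeg (Suc n) \<beta> = C" "p (\<beta>(n := 0)) \<noteq> 0" "P \<beta> = p (\<beta>(n := 0))"
        using b(1) unfolding P_def hom_def by (auto split: if_splits)
      have ne: "\<beta>(n := 0) \<noteq> \<gamma>f"
      proof
        assume e: "\<beta>(n := 0) = \<gamma>f"
        have "\<beta> n = C - mdeg n \<beta>" using h(2) mdeg_Suc[of n \<beta>] by simp
        also have "mdeg n \<beta> = mdeg n \<gamma>f" using e mdeg_upd by metis
        finally have "\<beta> = \<beta>s" unfolding \<beta>s_def using e by (metis fun_upd_triv fun_upd_upd)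
        then show False using b(2) by simp
      qed
      have "tle vr mless (p (\<beta>(n := 0))) (\<beta>(n := 0)) (p \<gamma>f) \<gamma>f" using mp h(3) ne unfolding ismax_def by blast
      moreover have "vr (p (\<beta>(n := 0))) (\<beta>(n := 0)) = vr (P \<beta>) \<beta>" unfolding vr_def h(4) by (rule vr_upd)
      moreover have "vr (p \<gamma>f) \<gamma>f = vr (P \<beta>s) \<beta>s" unfolding Pbs unfolding vr_def \<beta>s_def by (rule vr_upd[symmetric])
      moreover have "mdeg (Suc n) \<beta> = mdeg (Suc n) \<beta>s" using h(2) bsd by simp
      ultimately show "tle vr (Q0 n mless) (P \<beta>) \<beta> (P \<beta>s) \<beta>s"
        unfolding tle_def Q0_def using bs0 by auto
    qed
    have lmP: "lm (ord_r0m val n r mless) P = \<beta>s" unfolding ord0 by (rule lm_eq[OF sto0 Pmono mP])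
    have Pnz: "P \<noteq> zero_series" using mP unfolding ismax_def zero_series_def by auto
    have PJ': "P \<in> tate_ideal val (Suc n) (r(n := 0)) J0" using PJ P_def by simp
    obtain h where h: "h \<in> set H" "h \<noteq> zero_series" "mono_dvd (lm (ord_r0m val n r mless) h) \<beta>s"
      using GB PJ' Pnz lmP unfolding is_GB_def by metis
    have hp: "is_poly (Suc n) h" and hh: "homogeneous (Suc n) h" using HP h(1) by auto
    obtain d where hd: "\<forall>\<beta>. h \<beta> \<noteq> 0 \<longrightarrow> mdeg (Suc n) \<beta> = d" using hh unfolding homogeneous_def by blast
    obtain \<beta>1 where b1: "h \<beta>1 \<noteq> 0" using h(2) unfolding zero_series_def by blast
    have hmono: "\<forall>\<beta>. h \<beta> \<noteq> 0 \<longrightarrow> \<beta> \<in> {\<alpha>. monoN (Suc n) \<alpha>}" using hp unfolding is_poly_def by blast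
    have hfin: "finite {\<gamma>. h \<gamma> \<noteq> 0 \<and> vr (h \<gamma>) \<gamma> \<le> vr (h \<beta>1) \<beta>1}"
      using hp unfolding is_poly_def by (auto intro: finite_subset)
    obtain x where mx: "ismax (tle vr (Q0 n mless)) h x" using lm_ex[where v=vr, OF sto0 hmono b1 hfin] by blast
    have lmh: "lm (ord_r0m val n r mless) h = x" unfolding ord0 by (rule lm_eq[OF sto0 hmono mx])
    have hx: "h x \<noteq> 0" using mx unfolding ismax_def by blast
    have xm: "monoN (Suc n) x" using hmono hx by blast
    define x0 where "x0 = x(n := 0)"
    have x0m: "monoN n x0" unfolding x0_def by (rule monoN_upd0[OF xm])
    have dh: "dehomog n h \<alpha> = h (\<alpha>(n := d - mdeg n \<alpha>))" if am: "monoN n \<alpha>" for \<alpha>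
    proof (rule dehomog_single[OF am], intro allI impI)
      fix u assume "h (\<alpha>(n := u)) \<noteq> 0"
      then have "mdeg (Suc n) (\<alpha>(n := u)) = d" using hd by blast
      then show "u = d - mdeg n \<alpha>" unfolding mdeg_Suc mdeg_upd by simp
    qed
    have xrec: "x0(n := d - mdeg n x0) = x"
    proof -
      have "mdeg (Suc n) x = d" using hd hx by blast
      then have "x n = d - mdeg n x0" unfolding x0_def mdeg_Suc mdeg_upd by simp
      then show ?thesis unfolding x0_def by (metis fun_upd_triv fun_upd_upd)
    qed
    have dhx: "dehomog n h x0 = h x" using dh[OF x0m] xrec by simp
    have dmono: "\<forall>\<alpha>. dehomog n h \<alpha> \<noteq> 0 \<longrightarrow> \<alpha> \<in> {\<alpha>. monoN n \<alpha>}" by (auto simp: dehomog_def)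
    have mdh: "ismax (tle vr mless) (dehomog n h) x0"
      unfolding ismax_def
    proof (intro conjI allI impI)
      show "dehomog n h x0 \<noteq> 0" using dhx hx by simp
      fix \<alpha> assume a: "dehomog n h \<alpha> \<noteq> 0" "\<alpha> \<noteq> x0"
      have am: "monoN n \<alpha>" using a(1) by (auto simp: dehomog_def split: if_splits)
      define \<beta> where "\<beta> = \<alpha>(n := d - mdeg n \<alpha>)"
      have hb: "h \<beta> \<noteq> 0" "dehomog n h \<alpha> = h \<beta>" using dh[OF am] a(1) \<beta>_def by auto
      have b0: "\<beta>(n := 0) = \<alpha>" unfolding \<beta>_def using upd_n0[OF am] by simp
      have bx: "\<beta> \<noteq> x" using b0 a(2) x0_def by auto
      have "tle vr (Q0 n mless) (h \<beta>) \<beta> (h x) x" using mx hb(1) bx unfolding ismax_def by blast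
      moreover have "mdeg (Suc n) \<beta> = mdeg (Suc n) x" using hd hb(1) hx by metis
      moreover have "vr (h \<beta>) \<beta> = vr (h \<beta>) \<alpha>" unfolding vr_def \<beta>_def by (rule vr_upd)
      moreover have "vr (h x) x = vr (h x) x0" unfolding vr_def x0_def by (rule vr_upd[symmetric])
      ultimately show "tle vr mless (dehomog n h \<alpha>) \<alpha> (dehomog n h x0) x0"
        unfolding tle_def Q0_def using hb(2) dhx b0 x0_def by auto
    qed
    have lmdh: "lm (ord_rm val n r mless) (dehomog n h) = x0" unfolding ordm by (rule lm_eq[OF stom dmono mdh])
    have dhnz: "dehomog n h \<noteq> zero_series" using dhx hx unfolding zero_series_def by (metis)
    have dv: "mono_dvd x0 \<gamma>f"
      unfolding mono_dvd_def
    proof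
      fix i
      show "x0 i \<le> \<gamma>f i"
      proof (cases "i = n")
        case True then show ?thesis unfolding x0_def by simp
      next
        case False
        have "x i \<le> \<beta>s i" using h(3) lmh unfolding mono_dvd_def by simp
        then show ?thesis using False unfolding x0_def \<beta>s_def by simp
      qed
    qed
    show ?thesis using h(1) dhnz dv lmdh lmf by blast
  qed
  show ?thesis unfolding is_local_GB_def is_GB_def using sub1 sub2 main I_def by blast
qed


end
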